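(* The set $\mathcal V_{\mathrm{BSSC}}$ of all binary subspace chirps in $\mathbb C^{2^m}$ has exactly $2^m\prod_{r=1}^m(2^r+1)$ elements, and the set $\mathcal V_{\mathrm{BC}}$ of binary chirps has exactly $2^{m(m+3)/2}$ elements. Consequently $|\mathcal V_{\mathrm{BSSC}}|/|\mathcal V_{\mathrm{BC}}|=\prod_{r=1}^m(1+2^{-r})$, which increases to $\prod_{r\ge1}(1+2^{-r})\approx2.384$ as $m\to\infty$.
   Context: Fix $m\ge1$, $N=2^m$. Binary vectors are columns over $\mathbb F_2$; $\mathrm{Sym}(r;2)$ is the set of symmetric binary $r\times r$ matrices, $\mathcal G(m,r;2)$ the set of $r$-dimensional subspaces of $\mathbb F_2^m$. Vectors of $\mathbb C^N$ are indexed by $\mathbb F_2^m$. Whenever a binary expression appears in an exponent of $i$, binary entries are lifted to the integers $0,1$ and the expression is evaluated in $\mathbb Z$ (equivalently mod 4). Echelon data: for $0\le r\le m$ and $H\in\mathcal G(m,r;2)$, let $\mathbf H_{\mathcal I}$ be the unique $m\times r$ binary matrix in column reduced echelon form with column space $H$: there are indices $i_1<\dots<i_r$, $\mathcal I=\{i_1,\dots,i_r\}$, such that rows $i_1,\dots,i_r$ of $\mathbf H_{\mathcal I}$ form $\mathbf I_r$ and column $j$ of $\mathbf H_{\mathcal I}$ is zero in all rows above row $i_j$. Let $\mathbf I_{\tilde{\mathcal I}}$ be the $m\times(m-r)$ matrix whose columns are the standard basis vectors $\mathbf e_i$ with $i\notin\mathcal I$, in increasing order of $i$, and put $\mathbf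 P_{\mathcal I}=[\mathbf H_{\mathcal I}\ \ \mathbf I_{\tilde{\mathcal I}}]\in\mathrm{GL}(m;2)$. (For $r=0$: $H=\{0\}$, $\mathbf P_{\mathcal I}=\mathbf I_m$.) For $\mathbf S_r\in\mathrm{Sym}(r;2)$, $\tilde{\mathbf S}_r\in\mathrm{Sym}(m;2)$ denotes the matrix with $\mathbf S_r$ as its upper-left $r\times r$ block and zeros elsewhere. Binary subspace chirps: let $f(\mathbf v,\mathbf w,r)=\prod_{i=r+1}^m(1+v_i+w_i)$ computed in $\mathbb F_2$ and viewed in $\{0,1\}$. For $\mathbf b\in\mathbb F_2^m$, the binary subspace chirp (BSSC) $\mathbf w_{\mathbf b}=\mathbf w^{H,\mathbf S_r}_{\mathbf b}\in\mathbb C^N$ has entries $\mathbf w_{\mathbf b}(\mathbf a)=2^{-r/2}\,i^{\mathbf u^T\tilde{\mathbf S}_r\mathbf u+2\mathbf b^T\mathbf u}\,f(\mathbf b,\mathbf u,r)$ with $\mathbf u=\mathbf P_{\mathcal I}^{-1}\mathbf a\in\mathbb F_2^m$, for $\mathbf a\in\mathbb F_2^m$. The integer $r$ is its rank. $\mathcal V_{\mathrm{BSSC}}$ is the set of all such vectors over all $0\le r\le m$, $H\in\mathcal G(m,r;2)$, $\mathbf S_r\in\mathrm{Sym}(r;2)$, $\mathbf b\in\mathbb F_2^m$; binary chirps are the BSSCs of rank $r=m$ (then $H=\mathbb F_2^m$, $\mathbf P_{\mathcal I}=\mathbf I_m$), and $\mathcal V_{\mathrm{BC}}$ is their set. *)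

theory Defs
  imports "HOL-Analysis.Analysis" "HOL-Library.Z2"
begin

text \<open>Binary vectors of F_2^m are functions nat => bit (type bit = F_2) that vanish
  at indices >= m (0-based indices 0..m-1 stand for the paper's 1..m).
  Binary matrices are functions nat => nat => bit (row, column).\<close>

definition binvecs :: "nat \<Rightarrow> (nat \<Rightarrow> bit) set" where
  "binvecs m = {v. \<forall>i\<ge>m. v i = 0}"

definition lift :: "bit \<Rightarrow> int" where
  "lift x = (if x = 1 then 1 else 0)"

definition span2 :: "(nat \<Rightarrow> bit) list \<Rightarrow> (nat \<Rightarrow> bit) set" where
  "span2 vs = {(\<lambda>i. \<Sum>j<length vs. c j * (vs ! j) i) | c. True}"

definition lin_indep2 :: "(nat \<Rightarrow> bit) list \<Rightarrow> bool" where
  "lin_indep2 vs = (\<forall>c. (\<lambda>i. \<Sum>j<length vs. c j * (vs ! j) i) = (\<lambda>i. 0) \<longrightarrow> (\<forall>j<length vs. c j = 0))"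

definition is_subspace2 :: "nat \<Rightarrow> (nat \<Rightarrow> bit) set \<Rightarrow> bool" where
  "is_subspace2 m H = (H \<subseteq> binvecs m \<and> (\<lambda>i. 0) \<in> H \<and> (\<forall>x\<in>H. \<forall>y\<in>H. (\<lambda>i. x i + y i) \<in> H))"

definition grassmann :: "nat \<Rightarrow> nat \<Rightarrow> (nat \<Rightarrow> bit) set set" where
  "grassmann m r = {H. is_subspace2 m H \<and>
     (\<exists>vs. length vs = r \<and> set vs \<subseteq> binvecs m \<and> lin_indep2 vs \<and> span2 vs = H)}"

definition colspace :: "nat \<Rightarrow> (nat \<Rightarrow> nat \<Rightarrow> bit) \<Rightarrow> (nat \<Rightarrow> bit) set" where
  "colspace r M = {(\<lambda>i. \<Sum>j<r. c j * M i j) | c. True}"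

text \<open>M is an m x r matrix in column reduced echelon form with pivot rows
  piv 0 < ... < piv (r-1) (0-based); entries outside the m x r range and
  pivot values outside {0..<r} are normalised to 0.\<close>
definition is_cref :: "nat \<Rightarrow> nat \<Rightarrow> (nat \<Rightarrow> nat \<Rightarrow> bit) \<Rightarrow> (nat \<Rightarrow> nat) \<Rightarrow> bool" where
  "is_cref m r M piv =
     ((\<forall>j k. j < k \<and> k < r \<longrightarrow> piv j < piv k) \<and> (\<forall>j<r. piv j < m) \<and> (\<forall>j\<ge>r. piv j = 0) \<and>
      (\<forall>j<r. \<forall>k<r. M (piv k) j = (if k = j then 1 else 0)) \<and>
      (\<forall>j<r. \<forall>i<piv j. M i j = 0) \<and>
      (\<forall>i j. (m \<le> i \<or> r \<le> j) \<longrightarrow> M i j = 0))"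

definition echelon :: "nat \<Rightarrow> nat \<Rightarrow> (nat \<Rightarrow> bit) set \<Rightarrow> (nat \<Rightarrow> nat \<Rightarrow> bit) \<times> (nat \<Rightarrow> nat)" where
  "echelon m r H = (THE (M, piv). is_cref m r M piv \<and> colspace r M = H)"

text \<open>P_I = [H_I  I_{~I}], an m x m matrix.\<close>
definition Pmat :: "nat \<Rightarrow> nat \<Rightarrow> (nat \<Rightarrow> nat \<Rightarrow> bit) \<Rightarrow> (nat \<Rightarrow> nat) \<Rightarrow> (nat \<Rightarrow> nat \<Rightarrow> bit)" where
  "Pmat m r M piv = (\<lambda>i k. if k < r then M i k
      else if k < m then (if i = sorted_list_of_set ({0..<m} - piv ` {0..<r}) ! (k - r) then 1 else 0)
      else 0)"

definition mat_vec :: "nat \<Rightarrow> (nat \<Rightarrow> nat \<Rightarrow> bit) \<Rightarrow> (nat \<Rightarrow> bit) \<Rightarrow> (nat \<Rightarrow> bit)" where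
  "mat_vec m P u = (\<lambda>i. \<Sum>k<m. P i k * u k)"

text \<open>Sym(r;2): symmetric binary r x r matrices (zero outside the r x r block).
  Such an S is, as a function, also the padded matrix S~_r.\<close>
definition symmats :: "nat \<Rightarrow> (nat \<Rightarrow> nat \<Rightarrow> bit) set" where
  "symmats r = {S. (\<forall>i j. S i j = S j i) \<and> (\<forall>i j. (r \<le> i \<or> r \<le> j) \<longrightarrow> S i j = 0)}"

text \<open>The binary subspace chirp w_b^{H,S_r}, a vector of C^N indexed by F_2^m
  (extended by 0 outside F_2^m).\<close>
definition bssc :: "nat \<Rightarrow> nat \<Rightarrow> (nat \<Rightarrow> bit) set \<Rightarrow> (nat \<Rightarrow> nat \<Rightarrow> bit) \<Rightarrow> (nat \<Rightarrow> bit)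
    \<Rightarrow> ((nat \<Rightarrow> bit) \<Rightarrow> complex)" where
  "bssc m r H S b = (\<lambda>a. if a \<in> binvecs m then
     (let (M, piv) = echelon m r H;
          u = (THE u. u \<in> binvecs m \<and> mat_vec m (Pmat m r M piv) u = a);
          e = (\<Sum>i<m. \<Sum>j<m. lift (u i) * lift (S i j) * lift (u j)) + 2 * (\<Sum>i<m. lift (b i) * lift (u i));
          f = lift (\<Prod>i\<in>{r..<m}. 1 + b i + u i)
      in complex_of_real (2 powr (- real r / 2)) * (\<i> powi e) * of_int f)
     else 0)"

definition V_BSSC :: "nat \<Rightarrow> ((nat \<Rightarrow> bit) \<Rightarrow> complex) set" where
  "V_BSSC m = {bssc m r H S b | r H S b. r \<le> m \<and> H \<in> grassmann m r \<and> S \<in> symmats r \<and> b \<in> binvecs m}"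

definition V_BC :: "nat \<Rightarrow> ((nat \<Rightarrow> bit) \<Rightarrow> complex) set" where
  "V_BC m = {bssc m m H S b | H S b. H \<in> grassmann m m \<and> S \<in> symmats m \<and> b \<in> binvecs m}"

end

theory Submission
  imports Defs
begin


definition pp :: "nat \<Rightarrow> real" where "pp n = (\<Prod>r\<in>{1..n}. 1 + 2 powr (- real r))"

lemma pow_neg: "2 powr (- real r) = 1 / (2::real)^r"
  by (simp add: powr_minus powr_realpow divide_inverse)

lemma pp_Suc: "pp (Suc n) = pp n * (1 + 1/2^Suc n)"
  unfolding pp_def by (simp add: prod.cl_ivl_Suc pow_neg del: power_Suc)

lemma pp_pos: "pp n > 0"
  unfolding pp_def by (intro prod_pos) (simp add: pow_neg add_pos_pos)

lemma pp_lessThan: "pp n = (\<Prod>r<n. 1 + 2 powr (- real (Suc r)))"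
  unfolding pp_def
  by (induction n) (simp_all add: prod.cl_ivl_Suc prod.lessThan_Suc)

lemma pp_mono: "strict_mono pp"
proof (rule strict_mono_Suc_iff[THEN iffD2], intro allI)
  fix n show "pp n < pp (Suc n)" using pp_pos[of n] by (simp add: pp_Suc)
qed

lemma conv: "convergent_prod (\<lambda>r::nat. 1 + 2 powr (- real (Suc r)))"
proof -
  have "summable (\<lambda>r::nat. 2 powr (- real (Suc r)))"
  proof -
    have "summable (\<lambda>r::nat. (1/2::real) * (1/2) ^ r)"
      by (intro summable_mult summable_geometric) simp
    then have "summable (\<lambda>r::nat. (1/2::real) ^ Suc r)" by simp
    moreover have "(\<lambda>r::nat. 2 powr (-real (Suc r))) = (\<lambda>r. (1/2::real)^Suc r)"
    proof
      fix r :: nat show "2 powr (-real (Suc r)) = (1/2::real)^Suc r"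
        using pow_neg[of "Suc r"] by (simp only: power_one_over)
    qed
    ultimately show ?thesis by simp
  qed
  then show ?thesis by (subst convergent_prod_iff_summable_real) auto
qed

lemma lim: "pp \<longlonglongrightarrow> prodinf (\<lambda>r::nat. 1 + 2 powr (- real (Suc r)))"
proof -
  have "(\<lambda>n. \<Prod>i\<le>n. 1 + 2 powr (- real (Suc i))) \<longlonglongrightarrow> prodinf (\<lambda>r::nat. 1 + 2 powr (- real (Suc r)))"
    by (rule convergent_prod_LIMSEQ[OF conv])
  then have "(\<lambda>n. pp (Suc n)) \<longlonglongrightarrow> prodinf (\<lambda>r::nat. 1 + 2 powr (- real (Suc r)))"
    by (simp add: pp_lessThan lessThan_Suc_atMost)
  then show ?thesis by (rule LIMSEQ_imp_Suc)
qed

lemma tail: "K \<ge> 1 \<Longrightarrow> pp (K + n) \<le> pp K * (1 + 2 * (1/2^K - 1/2^(K+n)))"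
proof (induction n)
  case 0 then show ?case by simp
next
  case (Suc n)
  define x :: real where "x = 1/2^(K+n)"
  define y :: real where "y = 1/2^K"
  have x0: "x \<ge> 0" unfolding x_def by simp
  have "y \<le> 1/2" unfolding y_def using Suc.prems
    by (simp add: divide_simps) (metis One_nat_def le_imp_power_dvd dvd_imp_le power_one_right pos2 zero_less_power power_increasing one_le_numeral)
  have key: "(1 + 2*(y - x)) * (1 + x/2) \<le> 1 + 2*(y - x/2)"
  proof -
    have "x * (y - x - 1/2) \<le> 0" using x0 \<open>y \<le> 1/2\<close> by (intro mult_nonneg_nonpos) auto
    then show ?thesis by (simp add: algebra_simps)
  qed
  have "pp (K + Suc n) = pp (K+n) * (1 + x/2)" unfolding x_def by (simp add: pp_Suc)
  also have "\<dots> \<le> pp K * (1 + 2*(y - x)) * (1 + x/2)"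
    using Suc x0 unfolding x_def y_def by (intro mult_right_mono) auto
  also have "\<dots> \<le> pp K * (1 + 2*(y - x/2))" using key pp_pos[of K]
    by (metis mult.assoc mult_left_mono less_imp_le)
  finally show ?case unfolding x_def y_def by simp
qed

lemma upper: "pp n \<le> pp 15 * (1 + 2 / 2^15)"
proof (cases "n \<le> 15")
  case True
  then have "pp n \<le> pp 15" using strict_mono_leD[OF pp_mono] by blast
  also have "\<dots> \<le> pp 15 * (1 + 2 / 2^15)" using pp_pos[of 15] by simp
  finally show ?thesis .
next
  case False
  then obtain k where "n = 15 + k" by (metis le_add_diff_inverse nat_le_linear)
  then have "pp n \<le> pp 15 * (1 + 2 * (1/2^15 - 1/2^(15+k)))" using tail[of 15 k] by simp
  also have "\<dots> \<le> pp 15 * (1 + 2 / 2^15)" using pp_pos[of 15] by (intro mult_left_mono) auto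
  finally show ?thesis .
qed

lemma pp15: "pp 15 = (\<Prod>r<15. 1 + 1/2^Suc r)"
proof -
  have "\<And>r. 2 powr (- real (Suc r)) = 1/2^Suc r" by (rule pow_neg)
  then show ?thesis unfolding pp_lessThan by presburger
qed

lemma num1: "2.384 < pp 15" unfolding pp15 by (simp add: numeral_eq_Suc lessThan_Suc)
lemma num2: "pp 15 * (1 + 2 / 2^15) < 2.385" unfolding pp15 by (simp add: numeral_eq_Suc lessThan_Suc)

lemma analysis_part:
  "strict_mono (\<lambda>n::nat. \<Prod>r\<in>{1..n}. 1 + 2 powr (- real r))
    \<and> (\<lambda>r::nat. 1 + 2 powr (- real (Suc r))) has_prod prodinf (\<lambda>r::nat. 1 + 2 powr (- real (Suc r)))
    \<and> (\<lambda>n::nat. \<Prod>r\<in>{1..n}. 1 + 2 powr (- real r)) \<longlonglongrightarrow> prodinf (\<lambda>r::nat. 1 + 2 powr (- real (Suc r)))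
    \<and> 2.384 < prodinf (\<lambda>r::nat. 1 + 2 powr (- real (Suc r)))
    \<and> prodinf (\<lambda>r::nat. 1 + 2 powr (- real (Suc r))) < 2.385"
proof -
  have m: "strict_mono pp" by (rule pp_mono)
  have l: "pp \<longlonglongrightarrow> prodinf (\<lambda>r::nat. 1 + 2 powr (- real (Suc r)))" by (rule lim)
  have "pp 15 \<le> prodinf (\<lambda>r::nat. 1 + 2 powr (- real (Suc r)))"
    by (rule incseq_le[OF _ l]) (simp add: m strict_mono_mono incseq_def strict_mono_leD)
  then have lo: "2.384 < prodinf (\<lambda>r::nat. 1 + 2 powr (- real (Suc r)))" using num1 by linarith
  have "prodinf (\<lambda>r::nat. 1 + 2 powr (- real (Suc r))) \<le> pp 15 * (1 + 2 / 2^15)"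
    by (rule LIMSEQ_le_const2[OF l]) (intro exI[of _ 0] allI impI upper)
  then have hi: "prodinf (\<lambda>r::nat. 1 + 2 powr (- real (Suc r))) < 2.385" using num2 by linarith
  show ?thesis using m l lo hi conv by (auto simp: pp_def[abs_def])
qed


declare add_bit_eq_xor[simp del] mult_bit_eq_and[simp del]

lemma bit_UNIV: "(UNIV::bit set) = {0,1}"
  by (auto intro: bit.exhaust)

lemma card_bit: "card (UNIV::bit set) = 2"
  by (simp add: bit_UNIV)

lemma bit_add_self[simp]: "(x::bit) + x = 0"
  by (cases x) simp_all

lemma bit_add_eq0: "(x::bit) + y = 0 \<longleftrightarrow> x = y"
  by (cases x; cases y) simp_all

lemma bit_one_add_one[simp]: "(1::bit) + 1 = 0" by simp

lemma lift_simps[simp]: "lift 0 = 0" "lift 1 = 1"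
  by (simp_all add: lift_def)

definition lc :: "nat \<Rightarrow> (nat \<Rightarrow> bit) \<Rightarrow> (nat \<Rightarrow> nat \<Rightarrow> bit) \<Rightarrow> (nat \<Rightarrow> bit)" where
  "lc r c V = (\<lambda>i. \<Sum>j<r. c j * V j i)"

definition cols :: "(nat \<Rightarrow> nat \<Rightarrow> bit) \<Rightarrow> nat \<Rightarrow> nat \<Rightarrow> bit" where
  "cols M = (\<lambda>j i. M i j)"

lemma colspace_lc: "colspace r M = {lc r c (cols M) | c. True}"
  by (simp add: colspace_def lc_def cols_def)

lemma span2_lc: "span2 vs = {lc (length vs) c (\<lambda>j. vs ! j) | c. True}"
  by (simp add: span2_def lc_def)

lemma lc_add: "(\<lambda>i. lc r c V i + lc r d V i) = lc r (\<lambda>j. c j + d j) V"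
  by (simp add: lc_def sum.distrib[symmetric] distrib_right)

lemma lc_cong: "(\<And>j. j < r \<Longrightarrow> c j = d j) \<Longrightarrow> lc r c V = lc r d V"
  by (simp add: lc_def)

lemma lc_cong2: "(\<And>j. j < r \<Longrightarrow> V j = W j) \<Longrightarrow> lc r c V = lc r c W"
  by (simp add: lc_def)

lemma lc_Suc: "lc (Suc r) c V = (\<lambda>i. lc r c V i + c r * V r i)"
  by (simp add: lc_def)

lemma lc_zero: "lc r (\<lambda>j. 0) V = (\<lambda>i. 0)"
  by (simp add: lc_def)

lemma if_delta_mult: "(if j = k then (1::bit) else 0) * y = (if j = k then y else 0)"
  by simp

lemma lc_delta: "k < r \<Longrightarrow> lc r (\<lambda>j. if j = k then 1 else 0) V = V k"
  by (simp add: lc_def if_delta_mult)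

lemma binvecs_restrict_bij:
  "bij_betw (\<lambda>v. restrict v {..<m}) (binvecs m) (PiE {..<m} (\<lambda>_. UNIV::bit set))"
proof (rule bij_betwI')
  fix x y assume "x \<in> binvecs m" "y \<in> binvecs m"
  then show "(restrict x {..<m} = restrict y {..<m}) = (x = y)"
    unfolding binvecs_def by (auto simp: fun_eq_iff restrict_def) (metis not_le)
next
  fix x assume "x \<in> binvecs m" then show "restrict x {..<m} \<in> PiE {..<m} (\<lambda>_. UNIV)" by auto
next
  fix y assume y: "y \<in> PiE {..<m} (\<lambda>_. UNIV::bit set)"
  define x where "x = (\<lambda>i. if i < m then y i else 0)"
  have "x \<in> binvecs m" unfolding x_def binvecs_def by auto
  moreover have "y = restrict x {..<m}" using y unfolding x_def
    by (auto simp: fun_eq_iff restrict_def PiE_def extensional_def)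
  ultimately show "\<exists>x\<in>binvecs m. y = restrict x {..<m}" by blast
qed

lemma card_binvecs: "card (binvecs m) = 2 ^ m" and finite_binvecs: "finite (binvecs m)"
proof -
  have "card (PiE {..<m} (\<lambda>_. UNIV::bit set)) = 2^m"
    by (simp add: card_PiE card_bit)
  then show "card (binvecs m) = 2 ^ m" using bij_betw_same_card[OF binvecs_restrict_bij] by simp
  have "finite (PiE {..<m} (\<lambda>_. UNIV::bit set))"
    by (intro finite_PiE) (auto simp: bit_UNIV)
  then show "finite (binvecs m)" using bij_betw_finite[OF binvecs_restrict_bij] by simp
qed

lemma lc_trunc: "lc r c V = lc r (\<lambda>j. if j < r then c j else 0) V"
  by (rule lc_cong) simp

lemma lc_image: "{lc r c V | c. True} = (\<lambda>c. lc r c V) ` binvecs r"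
proof -
  have "\<And>c. (\<lambda>j. if j < r then c j else 0) \<in> binvecs r" by (simp add: binvecs_def)
  then show ?thesis by (auto simp: image_def) (metis lc_trunc)
qed

lemma lc_inj:
  assumes ind: "\<And>c. lc r c V = (\<lambda>i. 0) \<Longrightarrow> \<forall>j<r. c j = 0"
  shows "inj_on (\<lambda>c. lc r c V) (binvecs r)"
proof (rule inj_onI)
  fix c d assume c: "c \<in> binvecs r" and d: "d \<in> binvecs r" and eq: "lc r c V = lc r d V"
  have "lc r (\<lambda>j. c j + d j) V = (\<lambda>i. 0)"
    using lc_add[of r c V d] eq by simp
  then have "\<forall>j<r. c j + d j = 0" using ind by blast
  then show "c = d" using c d unfolding binvecs_def by (auto simp: fun_eq_iff bit_add_eq0) (metis not_le)
qed

lemma card_lc: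
  assumes ind: "\<And>c. lc r c V = (\<lambda>i. 0) \<Longrightarrow> \<forall>j<r. c j = 0"
  shows "card {lc r c V | c. True} = 2 ^ r"
  unfolding lc_image using card_image[OF lc_inj[OF ind]] card_binvecs by simp

lemma subspace_lc:
  assumes "is_subspace2 m H" "\<And>j. j < r \<Longrightarrow> V j \<in> H"
  shows "lc r c V \<in> H"
  using assms(2)
proof (induction r)
  case 0 then show ?case using assms(1) by (simp add: lc_def is_subspace2_def)
next
  case (Suc r)
  then have h: "lc r c V \<in> H" "V r \<in> H" by auto
  show ?case
  proof (cases "c r = 0")
    case True then show ?thesis using h by (simp add: lc_Suc)
  next
    case False then have "c r = 1" by simp
    then show ?thesis using h assms(1) by (simp add: lc_Suc is_subspace2_def)
  qed
qed


lemma cref_piv: "is_cref m r M p \<Longrightarrow> k < r \<Longrightarrow> lc r c (cols M) (p k) = c k"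
proof -
  assume cr: "is_cref m r M p" and k: "k < r"
  have "lc r c (cols M) (p k) = (\<Sum>j<r. if j = k then c j else 0)"
    unfolding lc_def cols_def
  proof (rule sum.cong)
    fix j assume "j \<in> {..<r}"
    then have "M (p k) j = (if k = j then 1 else 0)" using cr k unfolding is_cref_def by auto
    then show "c j * M (p k) j = (if j = k then c j else 0)" by auto
  qed simp
  also have "\<dots> = c k" using k by simp
  finally show ?thesis .
qed

lemma cref_indep: "is_cref m r M p \<Longrightarrow> lc r c (cols M) = (\<lambda>i. 0) \<Longrightarrow> \<forall>j<r. c j = 0"
  by (metis cref_piv)

lemma cref_le: "is_cref m r M p \<Longrightarrow> r \<le> m"
proof -
  assume cr: "is_cref m r M p"
  have "inj_on p {..<r}" using cr unfolding is_cref_def inj_on_def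
    by (metis lessThan_iff nat_neq_iff)
  moreover have "p ` {..<r} \<subseteq> {..<m}" using cr unfolding is_cref_def by auto
  ultimately show "r \<le> m" using card_inj_on_le[of p "{..<r}" "{..<m}"] by simp
qed

lemma cref_cols_binvecs: "is_cref m r M p \<Longrightarrow> cols M j \<in> binvecs m"
  unfolding is_cref_def cols_def binvecs_def by auto

lemma cref_zero_outside: "is_cref m r M p \<Longrightarrow> m \<le> i \<or> r \<le> j \<Longrightarrow> M i j = 0"
  unfolding is_cref_def by auto

lemma cref_colspace_sub: "is_cref m r M p \<Longrightarrow> colspace r M \<subseteq> binvecs m"
  unfolding colspace_lc lc_def binvecs_def cols_def
  by (auto simp: cref_zero_outside)

lemma in_colspace: "lc r c (cols M) \<in> colspace r M"
  unfolding colspace_lc by blast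

lemma colspaceE: "x \<in> colspace r M \<Longrightarrow> \<exists>c. x = lc r c (cols M)"
  unfolding colspace_lc by simp

lemma cref_subspace: "is_cref m r M p \<Longrightarrow> is_subspace2 m (colspace r M)"
proof -
  assume cr: "is_cref m r M p"
  have "(\<lambda>i. 0) \<in> colspace r M" using in_colspace[of r "\<lambda>j. 0" M] by (simp only: lc_zero)
  moreover have "\<forall>x\<in>colspace r M. \<forall>y\<in>colspace r M. (\<lambda>i. x i + y i) \<in> colspace r M"
  proof (intro ballI)
    fix x y assume "x \<in> colspace r M" "y \<in> colspace r M"
    then obtain c d where "x = lc r c (cols M)" "y = lc r d (cols M)" using colspaceE by metis
    then show "(\<lambda>i. x i + y i) \<in> colspace r M" using in_colspace lc_add by simp
  qed
  ultimately show ?thesis unfolding is_subspace2_def using cref_colspace_sub[OF cr] by blast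
qed

lemma cref_card: "is_cref m r M p \<Longrightarrow> card (colspace r M) = 2^r"
  unfolding colspace_lc by (rule card_lc) (rule cref_indep)

lemma grass_props: "H \<in> grassmann m r \<Longrightarrow> is_subspace2 m H \<and> card H = 2^r"
proof -
  assume "H \<in> grassmann m r"
  then have "is_subspace2 m H \<and> (\<exists>vs. length vs = r \<and> set vs \<subseteq> binvecs m \<and> lin_indep2 vs \<and> span2 vs = H)"
    by (simp add: grassmann_def)
  then obtain vs where sub: "is_subspace2 m H" and vs: "length vs = r" "lin_indep2 vs" "span2 vs = H"
    by blast
  have "card {lc (length vs) c (\<lambda>j. vs ! j) | c. True} = 2 ^ length vs"
  proof (rule card_lc)
    fix c assume "lc (length vs) c ((!) vs) = (\<lambda>i. 0)"
    then have "(\<lambda>i. \<Sum>j<length vs. c j * (vs ! j) i) = (\<lambda>i. 0)" unfolding lc_def .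
    then show "\<forall>j<length vs. c j = 0" using vs(2)[unfolded lin_indep2_def] by blast
  qed
  moreover have "{lc (length vs) c (\<lambda>j. vs ! j) | c. True} = H" using vs(3) unfolding span2_lc .
  ultimately show ?thesis using sub vs(1) by simp
qed

lemma cref_grass: "is_cref m r M p \<Longrightarrow> colspace r M \<in> grassmann m r"
proof -
  assume cr: "is_cref m r M p"
  define vs where "vs = map (cols M) [0..<r]"
  have len: "length vs = r" unfolding vs_def by simp
  have nth: "\<And>j. j < r \<Longrightarrow> vs ! j = cols M j" unfolding vs_def by simp
  have lcv: "\<And>c. lc (length vs) c (\<lambda>j. vs ! j) = lc r c (cols M)"
    unfolding len by (rule lc_cong2) (simp add: nth)
  have "set vs \<subseteq> binvecs m" unfolding vs_def using cref_cols_binvecs[OF cr] by auto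
  moreover have "lin_indep2 vs"
    unfolding lin_indep2_def using cref_indep[OF cr] lcv len unfolding lc_def by metis
  moreover have "span2 vs = colspace r M" unfolding span2_lc colspace_lc lcv ..
  ultimately show ?thesis using cref_subspace[OF cr] len unfolding grassmann_def mem_Collect_eq
    by (intro conjI exI[of _ vs]) auto
qed


definition ext1 :: "nat \<Rightarrow> nat \<Rightarrow> (nat \<Rightarrow> nat \<Rightarrow> bit) \<Rightarrow> (nat \<Rightarrow> nat \<Rightarrow> bit)" where
  "ext1 m r M = (\<lambda>i j. if j = r \<and> i = m then 1 else M i j)"

definition ext2 :: "nat \<Rightarrow> (nat \<Rightarrow> bit) \<Rightarrow> (nat \<Rightarrow> nat \<Rightarrow> bit) \<Rightarrow> (nat \<Rightarrow> nat \<Rightarrow> bit)" where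
  "ext2 m w M = (\<lambda>i j. if i = m then w j else M i j)"

lemma crefD:
  assumes "is_cref m r M p"
  shows "\<And>j k. j < k \<Longrightarrow> k < r \<Longrightarrow> p j < p k"
    "\<And>j. j < r \<Longrightarrow> p j < m"
    "\<And>j. r \<le> j \<Longrightarrow> p j = 0"
    "\<And>j k. j < r \<Longrightarrow> k < r \<Longrightarrow> M (p k) j = (if k = j then 1 else 0)"
    "\<And>j i. j < r \<Longrightarrow> i < p j \<Longrightarrow> M i j = 0"
    "\<And>i j. m \<le> i \<or> r \<le> j \<Longrightarrow> M i j = 0"
  using assms unfolding is_cref_def by blast+

lemma crefI:
  assumes "\<And>j k. j < k \<Longrightarrow> k < r \<Longrightarrow> p j < p k"
    "\<And>j. j < r \<Longrightarrow> p j < m"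
    "\<And>j. r \<le> j \<Longrightarrow> p j = 0"
    "\<And>j k. j < r \<Longrightarrow> k < r \<Longrightarrow> M (p k) j = (if k = j then 1 else 0)"
    "\<And>j i. j < r \<Longrightarrow> i < p j \<Longrightarrow> M i j = 0"
    "\<And>i j. m \<le> i \<or> r \<le> j \<Longrightarrow> M i j = 0"
  shows "is_cref m r M p"
  using assms unfolding is_cref_def by blast

lemma cref_ext1: "is_cref m r M p \<Longrightarrow> is_cref (Suc m) (Suc r) (ext1 m r M) (p(r:=m))"
proof -
  assume cr: "is_cref m r M p"
  note D = crefD[OF cr]
  show ?thesis
  proof (rule crefI)
    fix j k assume "j < k" "k < Suc r"
    then show "(p(r := m)) j < (p(r := m)) k"
      using D(1)[of j k] D(2)[of j] by (cases "k = r") auto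
  next
    fix j assume "j < Suc r" then show "(p(r := m)) j < Suc m" using D(2)[of j] by (cases "j = r") auto
  next
    fix j assume "Suc r \<le> j" then show "(p(r := m)) j = 0" using D(3)[of j] by auto
  next
    fix j k assume j: "j < Suc r" and k: "k < Suc r"
    show "ext1 m r M ((p(r := m)) k) j = (if k = j then 1 else 0)"
    proof (cases "k = r")
      case True then show ?thesis using D(6)[of m j] j by (auto simp: ext1_def)
    next
      case False then have k': "k < r" using k by simp
      then have "p k \<noteq> m" using D(2)[of k] by simp
      then show ?thesis using False k' j D(4)[of j k] D(6)[of "p k" r] by (cases "j = r") (auto simp: ext1_def)
    qed
  next
    fix j i assume j: "j < Suc r" and i: "i < (p(r := m)) j"
    show "ext1 m r M i j = 0"
    proof (cases "j = r")
      case True then show ?thesis using i D(6)[of i r] by (auto simp: ext1_def)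
    next
      case False then show ?thesis using i j D(5)[of j i] by (auto simp: ext1_def)
    qed
  next
    fix i j assume "Suc m \<le> i \<or> Suc r \<le> j"
    then show "ext1 m r M i j = 0" using D(6)[of i j] by (auto simp: ext1_def)
  qed
qed

lemma cref_ext2: "is_cref m r M p \<Longrightarrow> w \<in> binvecs r \<Longrightarrow> is_cref (Suc m) r (ext2 m w M) p"
proof -
  assume cr: "is_cref m r M p" and w: "w \<in> binvecs r"
  note D = crefD[OF cr]
  show ?thesis
  proof (rule crefI)
    fix j k assume "j < k" "k < r" then show "p j < p k" by (rule D(1))
  next
    fix j assume "j < r" then show "p j < Suc m" using D(2)[of j] by simp
  next
    fix j assume "r \<le> j" then show "p j = 0" by (rule D(3))
  next
    fix j k assume j: "j < r" and k: "k < r"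
    then show "ext2 m w M (p k) j = (if k = j then 1 else 0)"
      using D(2)[of k] D(4)[of j k] by (simp add: ext2_def)
  next
    fix j i assume j: "j < r" and i: "i < p j"
    then show "ext2 m w M i j = 0" using D(2)[of j] D(5)[of j i] by (simp add: ext2_def)
  next
    fix i j assume "Suc m \<le> i \<or> r \<le> j"
    then show "ext2 m w M i j = 0" using D(6)[of i j] w by (auto simp: ext2_def binvecs_def)
  qed
qed


lemma binvecs0: "binvecs 0 = {\<lambda>i. 0}"
  unfolding binvecs_def by auto

lemma subspace_finite: "is_subspace2 m H \<Longrightarrow> finite H"
  unfolding is_subspace2_def using finite_binvecs finite_subset by blast

lemma cols_ext1_lt: "j < r \<Longrightarrow> cols (ext1 m r M) j = cols M j"
  by (auto simp: cols_def ext1_def fun_eq_iff)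

lemma lc_ext1:
  assumes cr: "is_cref m r M p"
  shows "lc (Suc r) c (cols (ext1 m r M)) = (\<lambda>i. lc r c (cols M) i + c r * (if i = m then 1 else 0))"
proof -
  have "cols (ext1 m r M) r = (\<lambda>i. if i = m then 1 else 0)"
    using crefD(6)[OF cr] by (auto simp: cols_def ext1_def fun_eq_iff)
  moreover have "lc r c (cols (ext1 m r M)) = lc r c (cols M)"
    by (rule lc_cong2) (rule cols_ext1_lt)
  ultimately show ?thesis by (simp add: lc_Suc)
qed

lemma lc_upd: "lc r (c(r := x)) V = lc r c V"
  by (rule lc_cong) simp

lemma cref_exists:
  "is_subspace2 m H \<Longrightarrow> card H = 2^r \<Longrightarrow> \<exists>M p. is_cref m r M p \<and> colspace r M = H"
proof (induction m arbitrary: H r)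
  case 0
  have "H \<subseteq> {\<lambda>i. 0}" "(\<lambda>i. 0) \<in> H" using "0.prems"(1) binvecs0 unfolding is_subspace2_def by auto
  then have H: "H = {\<lambda>i. 0}" by blast
  then have "Suc 0 = 2 ^ r" using "0.prems"(2) by simp
  then have r: "r = 0" by (metis nat_power_eq_Suc_0_iff numeral_2_eq_2 n_not_Suc_n)
  have "is_cref 0 0 (\<lambda>i j. 0) (\<lambda>j. 0)" by (simp add: is_cref_def)
  moreover have "colspace 0 (\<lambda>i j. 0) = H" unfolding H colspace_def by simp
  ultimately show ?case using r by blast
next
  case (Suc m)
  have sub: "is_subspace2 (Suc m) H" by fact
  have fin: "finite H" using subspace_finite[OF sub] .
  have Hb: "H \<subseteq> binvecs (Suc m)" and H0: "(\<lambda>i. 0) \<in> H"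
    and Hadd: "\<And>x y. x \<in> H \<Longrightarrow> y \<in> H \<Longrightarrow> (\<lambda>i. x i + y i) \<in> H"
    using sub unfolding is_subspace2_def by auto
  define e where "e = (\<lambda>i::nat. if i = m then (1::bit) else 0)"
  show ?case
  proof (cases "e \<in> H")
    case True
    define H0 where "H0 = {v \<in> H. v m = 0}"
    define t where "t = (\<lambda>v i. v i + e i)"
    have sub0: "is_subspace2 m H0"
      unfolding is_subspace2_def
    proof (intro conjI ballI)
      show "H0 \<subseteq> binvecs m"
      proof
        fix v assume "v \<in> H0"
        then have vb: "v \<in> binvecs (Suc m)" and vm: "v m = 0" using Hb unfolding H0_def by auto
        show "v \<in> binvecs m" unfolding binvecs_def
        proof (intro CollectI allI impI)
          fix i assume "m \<le> i"
          then show "v i = 0" using vb vm unfolding binvecs_def by (cases "i = m") auto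
        qed
      qed
      show "(\<lambda>i. 0) \<in> H0" using H0 unfolding H0_def by simp
      fix x y assume "x \<in> H0" "y \<in> H0" then show "(\<lambda>i. x i + y i) \<in> H0" using Hadd unfolding H0_def by simp
    qed
    have tH: "\<And>v. v \<in> H \<Longrightarrow> t v \<in> H" unfolding t_def using Hadd True by blast
    have tt: "\<And>v. t (t v) = v" unfolding t_def by (simp add: add.assoc)
    have tm: "\<And>v. t v m = v m + 1" unfolding t_def e_def by simp
    have split: "H = H0 \<union> t ` H0"
    proof
      show "H \<subseteq> H0 \<union> t ` H0"
      proof
        fix v assume v: "v \<in> H"
        show "v \<in> H0 \<union> t ` H0"
        proof (cases "v m = 0")
          case True then show ?thesis using v unfolding H0_def by simp
        next
          case False then have "t v \<in> H0" using v tH tm unfolding H0_def by simp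
          then have "t (t v) \<in> t ` H0" by blast
          then show ?thesis using tt by simp
        qed
      qed
      show "H0 \<union> t ` H0 \<subseteq> H" using tH unfolding H0_def by auto
    qed
    have disj: "H0 \<inter> t ` H0 = {}" using tm unfolding H0_def by auto
    have inj: "inj_on t H0" by (metis inj_onI tt)
    have fin0: "finite H0" using fin unfolding H0_def by simp
    have "card H = 2 * card H0"
      using card_Un_disjoint[OF fin0 _ disj] fin0 card_image[OF inj] split by simp
    moreover have "card H0 \<ge> 1"
    proof -
      have "(\<lambda>i. 0) \<in> H0" using H0 unfolding H0_def by simp
      then have "H0 \<noteq> {}" by blast
      then show ?thesis using fin0 by (simp add: Suc_le_eq card_gt_0_iff)
    qed
    ultimately obtain r' where r: "r = Suc r'" using Suc.prems(2)
      by (cases r) auto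
    then have c0: "card H0 = 2^r'" using Suc.prems(2) \<open>card H = 2 * card H0\<close> by simp
    obtain M0 p0 where cr0: "is_cref m r' M0 p0" and cs0: "colspace r' M0 = H0"
      using Suc.IH[OF sub0 c0] by blast
    have cr: "is_cref (Suc m) r (ext1 m r' M0) (p0(r' := m))" using cref_ext1[OF cr0] r by simp
    have lcx: "\<And>c. lc (Suc r') c (cols (ext1 m r' M0)) = (\<lambda>i. lc r' c (cols M0) i + c r' * e i)"
      using lc_ext1[OF cr0] unfolding e_def by simp
    have "colspace r (ext1 m r' M0) = H"
    proof
      show "colspace r (ext1 m r' M0) \<subseteq> H"
      proof
        fix v assume "v \<in> colspace r (ext1 m r' M0)"
        then obtain c where v: "v = lc (Suc r') c (cols (ext1 m r' M0))" using colspaceE r by blast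
        have l0: "lc r' c (cols M0) \<in> H" using in_colspace[of r' c M0] cs0 unfolding H0_def by auto
        show "v \<in> H"
        proof (cases "c r' = 0")
          case True then show ?thesis using v lcx l0 by simp
        next
          case False then have "c r' = 1" by simp
          then show ?thesis using v lcx tH[OF l0] unfolding t_def by simp
        qed
      qed
      show "H \<subseteq> colspace r (ext1 m r' M0)"
      proof
        fix v assume v: "v \<in> H"
        show "v \<in> colspace r (ext1 m r' M0)"
        proof (cases "v m = 0")
          case True
          then have "v \<in> colspace r' M0" using v cs0 unfolding H0_def by simp
          then obtain c where c: "v = lc r' c (cols M0)" using colspaceE by blast
          have "lc (Suc r') (c(r' := 0)) (cols (ext1 m r' M0)) = v"
            using lcx[of "c(r' := 0)"] c lc_upd[of r' c 0 "cols M0"] by simp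
          then show ?thesis using in_colspace r by metis
        next
          case False
          then have "t v \<in> colspace r' M0" using v cs0 tH tm unfolding H0_def by simp
          then obtain c where c: "t v = lc r' c (cols M0)" using colspaceE by blast
          have "lc (Suc r') (c(r' := 1)) (cols (ext1 m r' M0)) = (\<lambda>i. t v i + e i)"
            using lcx[of "c(r' := 1)"] c lc_upd[of r' c 1 "cols M0"] by simp
          also have "\<dots> = v" unfolding t_def by (simp add: add.assoc)
          finally show ?thesis using in_colspace r by metis
        qed
      qed
    qed
    then show ?thesis using cr by blast
  next
    case False
    define proj where "proj = (\<lambda>v::nat\<Rightarrow>bit. v(m := 0))"
    have injp: "inj_on proj H"
    proof (rule inj_onI)
      fix v w assume v: "v \<in> H" and w: "w \<in> H" and eq: "proj v = proj w"
      show "v = w"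
      proof (rule ccontr)
        assume ne: "v \<noteq> w"
        have "\<And>i. i \<noteq> m \<Longrightarrow> v i = w i" using eq unfolding proj_def by (metis fun_upd_other)
        then have "v m \<noteq> w m" using ne by (metis ext)
        then have "(\<lambda>i. v i + w i) = e" unfolding e_def
          using \<open>\<And>i. i \<noteq> m \<Longrightarrow> v i = w i\<close>
          by (auto simp: fun_eq_iff) (metis bit_add_eq0 bit_not_zero_iff)
        then show False using Hadd[OF v w] False by simp
      qed
    qed
    define H' where "H' = proj ` H"
    have sub': "is_subspace2 m H'"
      unfolding is_subspace2_def
    proof (intro conjI ballI)
      show "H' \<subseteq> binvecs m"
      proof
        fix x assume "x \<in> H'"
        then obtain v where "v \<in> H" "x = proj v" unfolding H'_def by blast
        then show "x \<in> binvecs m" using Hb unfolding proj_def binvecs_def by auto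
      qed
      have "proj (\<lambda>i. 0) = (\<lambda>i. 0)" unfolding proj_def by auto
      then show "(\<lambda>i. 0) \<in> H'" using H0 unfolding H'_def by (metis image_eqI)
      fix x y assume "x \<in> H'" "y \<in> H'"
      then obtain v w where "v \<in> H" "w \<in> H" "x = proj v" "y = proj w" unfolding H'_def by blast
      moreover have "(\<lambda>i. proj v i + proj w i) = proj (\<lambda>i. v i + w i)" unfolding proj_def by auto
      ultimately show "(\<lambda>i. x i + y i) \<in> H'" using Hadd unfolding H'_def by auto
    qed
    have c': "card H' = 2^r" using card_image[OF injp] Suc.prems(2) unfolding H'_def by simp
    obtain M' p where cr': "is_cref m r M' p" and cs': "colspace r M' = H'"
      using Suc.IH[OF sub' c'] by blast
    have "\<forall>j\<in>{..<r}. \<exists>v. v \<in> H \<and> proj v = cols M' j"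
    proof
      fix j assume "j \<in> {..<r}"
      then have "cols M' j \<in> H'" using in_colspace[of r "\<lambda>k. if k = j then 1 else 0" M'] lc_delta cs' by auto
      then show "\<exists>v. v \<in> H \<and> proj v = cols M' j" unfolding H'_def by auto
    qed
    then obtain L where L: "\<And>j. j < r \<Longrightarrow> L j \<in> H \<and> proj (L j) = cols M' j"
      using bchoice[of "{..<r}"] by (metis lessThan_iff)
    define w where "w = (\<lambda>j. if j < r then L j m else 0)"
    have wb: "w \<in> binvecs r" unfolding w_def binvecs_def by simp
    have cr: "is_cref (Suc m) r (ext2 m w M') p" by (rule cref_ext2[OF cr' wb])
    have colsL: "\<And>j. j < r \<Longrightarrow> cols (ext2 m w M') j = L j"
    proof -
      fix j assume j: "j < r"
      show "cols (ext2 m w M') j = L j"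
      proof
        fix i show "cols (ext2 m w M') j i = L j i"
        proof (cases "i = m")
          case True then show ?thesis using j by (simp add: cols_def ext2_def w_def)
        next
          case False
          have "proj (L j) i = cols M' j i" using L[OF j] by simp
          then show ?thesis using False unfolding cols_def ext2_def proj_def by simp
        qed
      qed
    qed
    have lcL: "\<And>c. lc r c (cols (ext2 m w M')) = lc r c L" by (rule lc_cong2) (rule colsL)
    have "colspace r (ext2 m w M') = H"
    proof
      show "colspace r (ext2 m w M') \<subseteq> H"
      proof
        fix v assume "v \<in> colspace r (ext2 m w M')"
        then obtain c where "v = lc r c L" using colspaceE lcL by metis
        then show "v \<in> H" using subspace_lc[OF sub, of r L c] L by blast
      qed
      show "H \<subseteq> colspace r (ext2 m w M')"
      proof
        fix v assume v: "v \<in> H"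
        then have "proj v \<in> colspace r M'" using cs' unfolding H'_def by simp
        then obtain c where c: "proj v = lc r c (cols M')" using colspaceE by blast
        have uH: "lc r c L \<in> H" using subspace_lc[OF sub, of r L c] L by blast
        have "proj (lc r c L) = proj v"
        proof
          fix i show "proj (lc r c L) i = proj v i"
          proof (cases "i = m")
            case True
            have "lc r c (cols M') m = 0" unfolding lc_def cols_def using crefD(6)[OF cr'] by simp
            then show ?thesis using True c unfolding proj_def by simp
          next
            case False
            have "lc r c L i = lc r c (cols M') i" unfolding lc_def
            proof (rule sum.cong)
              fix j assume "j \<in> {..<r}"
              then have "proj (L j) i = cols M' j i" using L by simp
              then show "c j * L j i = c j * cols M' j i" using False unfolding proj_def by simp
            qed simp
            then show ?thesis using False c unfolding proj_def by simp
          qed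
        qed
        then have "lc r c L = v" using injp uH v by (meson inj_onD)
        then show "v \<in> colspace r (ext2 m w M')" using in_colspace lcL by metis
      qed
    qed
    then show ?thesis using cr by blast
  qed
qed


definition lead :: "(nat \<Rightarrow> bit) \<Rightarrow> nat" where "lead v = (LEAST i. v i = 1)"

lemma lead_lc:
  assumes cr: "is_cref m r M p" and j0: "j0 < r" "c j0 = 1" "\<forall>j<j0. c j = 0"
  shows "lead (lc r c (cols M)) = p j0"
proof -
  have a: "lc r c (cols M) (p j0) = 1" using cref_piv[OF cr j0(1)] j0(2) by simp
  have b: "\<forall>i<p j0. lc r c (cols M) i = 0"
  proof (intro allI impI)
    fix i assume i: "i < p j0"
    show "lc r c (cols M) i = 0" unfolding lc_def cols_def
    proof (rule sum.neutral, intro ballI)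
      fix j assume j: "j \<in> {..<r}"
      show "c j * M i j = 0"
      proof (cases "j < j0")
        case True then show ?thesis using j0(3) by simp
      next
        case False
        then have "p j0 \<le> p j" using crefD(1)[OF cr, of j0 j] j by (cases "j = j0") auto
        then show ?thesis using crefD(5)[OF cr, of j i] i j by simp
      qed
    qed
  qed
  show ?thesis unfolding lead_def
  proof (rule Least_equality)
    show "lc r c (cols M) (p j0) = 1" by (rule a)
    fix y assume "lc r c (cols M) y = 1"
    then show "p j0 \<le> y" using b by (metis not_le zero_neq_one)
  qed
qed

lemma piv_set:
  assumes cr: "is_cref m r M p"
  shows "{lead v | v. v \<in> colspace r M \<and> v \<noteq> (\<lambda>i. 0)} = p ` {..<r}"
proof
  show "p ` {..<r} \<subseteq> {lead v | v. v \<in> colspace r M \<and> v \<noteq> (\<lambda>i. 0)}"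
  proof
    fix x assume "x \<in> p ` {..<r}"
    then obtain j where j: "j < r" "x = p j" by auto
    define c where "c = (\<lambda>k. if k = j then (1::bit) else 0)"
    have "lc r c (cols M) \<in> colspace r M" by (rule in_colspace)
    moreover have "lc r c (cols M) \<noteq> (\<lambda>i. 0)"
      using cref_piv[OF cr j(1), of c] unfolding c_def by (metis zero_neq_one)
    moreover have "lead (lc r c (cols M)) = x"
      using lead_lc[OF cr j(1), of c] j unfolding c_def by simp
    ultimately show "x \<in> {lead v | v. v \<in> colspace r M \<and> v \<noteq> (\<lambda>i. 0)}" by blast
  qed
  show "{lead v | v. v \<in> colspace r M \<and> v \<noteq> (\<lambda>i. 0)} \<subseteq> p ` {..<r}"
  proof
    fix x assume "x \<in> {lead v | v. v \<in> colspace r M \<and> v \<noteq> (\<lambda>i. 0)}"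
    then obtain v where v: "x = lead v" "v \<in> colspace r M" "v \<noteq> (\<lambda>i. 0)" by blast
    then obtain c where c: "v = lc r c (cols M)" using colspaceE by blast
    have ex: "\<exists>j. j < r \<and> c j = 1"
    proof (rule ccontr)
      assume "\<not> (\<exists>j. j < r \<and> c j = 1)"
      then have "lc r c (cols M) = lc r (\<lambda>j. 0) (cols M)" by (intro lc_cong) simp
      then show False using v(3) c lc_zero by simp
    qed
    define j0 where "j0 = (LEAST j. j < r \<and> c j = 1)"
    have j0: "j0 < r \<and> c j0 = 1" unfolding j0_def using LeastI_ex[OF ex] .
    have "\<forall>j<j0. c j = 0"
    proof (intro allI impI)
      fix j assume "j < j0"
      then have "\<not> (j < r \<and> c j = 1)" unfolding j0_def by (rule not_less_Least)
      then show "c j = 0" using \<open>j < j0\<close> j0 by simp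
    qed
    then have "lead v = p j0" using lead_lc[OF cr] j0 c by simp
    then show "x \<in> p ` {..<r}" using v(1) j0 by simp
  qed
qed

lemma smono_inj:
  fixes r :: nat and f :: "nat \<Rightarrow> nat"
  assumes sm: "\<And>j k. j < k \<Longrightarrow> k < r \<Longrightarrow> f j < (f k::nat)"
  shows "inj_on f {..<r}"
proof (rule inj_onI)
  fix x y assume xy: "x \<in> {..<r}" "y \<in> {..<r}" "f x = f y"
  show "x = y"
  proof (rule ccontr)
    assume "x \<noteq> y"
    then have "x < y \<or> y < x" by arith
    then show False using sm[of x y] sm[of y x] xy by auto
  qed
qed

lemma smono_rank:
  fixes r :: nat and f :: "nat \<Rightarrow> nat"
  assumes sm: "\<And>j k. j < k \<Longrightarrow> k < r \<Longrightarrow> f j < (f k::nat)" and j: "j < r"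
  shows "card {x \<in> f ` {..<r}. x < f j} = j"
proof -
  have "{x \<in> f ` {..<r}. x < f j} = f ` {..<j}"
  proof
    show "{x \<in> f ` {..<r}. x < f j} \<subseteq> f ` {..<j}"
    proof
      fix x assume "x \<in> {x \<in> f ` {..<r}. x < f j}"
      then obtain k where k: "k < r" "x = f k" "f k < f j" by auto
      have "k < j"
      proof (rule ccontr)
        assume "\<not> k < j"
        then have "j \<le> k" by simp
        then have "f j \<le> f k" using sm[of j k] k(1) by (cases "j = k") auto
        then show False using k(3) by simp
      qed
      then show "x \<in> f ` {..<j}" using k by auto
    qed
    show "f ` {..<j} \<subseteq> {x \<in> f ` {..<r}. x < f j}" using sm j by auto
  qed
  moreover have "inj_on f {..<j}" using smono_inj[of j f] sm j by auto
  ultimately show ?thesis by (simp add: card_image)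
qed

lemma smono_image_eq:
  fixes r :: nat and f g :: "nat \<Rightarrow> nat"
  assumes sf: "\<And>j k. j < k \<Longrightarrow> k < r \<Longrightarrow> f j < (f k::nat)"
    and sg: "\<And>j k. j < k \<Longrightarrow> k < r \<Longrightarrow> g j < (g k::nat)"
    and im: "f ` {..<r} = g ` {..<r}" and j: "j < r"
  shows "f j = g j"
proof -
  have "f j \<in> g ` {..<r}" using im j by auto
  then obtain k where k: "k < r" "f j = g k" by auto
  have "j = k" using smono_rank[of r f j, OF sf j] smono_rank[of r g k, OF sg k(1)] k(2) im by simp
  then show ?thesis using k by simp
qed

lemma cref_unique:
  assumes c1: "is_cref m r M1 p1" and c2: "is_cref m r M2 p2"
    and eq: "colspace r M1 = colspace r M2"
  shows "M1 = M2 \<and> p1 = p2"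
proof -
  have im: "p1 ` {..<r} = p2 ` {..<r}" using piv_set[OF c1] piv_set[OF c2] eq by simp
  have pe: "\<And>j. j < r \<Longrightarrow> p1 j = p2 j"
    by (rule smono_image_eq[OF crefD(1)[OF c1] crefD(1)[OF c2] im]) auto
  have p: "p1 = p2"
  proof
    fix j show "p1 j = p2 j" using pe[of j] crefD(3)[OF c1, of j] crefD(3)[OF c2, of j] by (cases "j < r") auto
  qed
  have colj: "\<And>j. j < r \<Longrightarrow> cols M1 j = cols M2 j"
  proof -
    fix j assume j: "j < r"
    have "cols M1 j \<in> colspace r M1"
      using in_colspace[of r "\<lambda>k. if k = j then 1 else 0" M1] lc_delta[OF j] by metis
    then have "cols M1 j \<in> colspace r M2" using eq by simp
    then obtain c where c: "cols M1 j = lc r c (cols M2)" using colspaceE by blast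
    have "\<And>k. k < r \<Longrightarrow> c k = (if k = j then 1 else 0)"
    proof -
      fix k assume k: "k < r"
      have "c k = lc r c (cols M2) (p2 k)" using cref_piv[OF c2 k] by simp
      also have "\<dots> = M1 (p1 k) j" using c p unfolding cols_def by (metis)
      also have "\<dots> = (if k = j then 1 else 0)" using crefD(4)[OF c1 j k] by simp
      finally show "c k = (if k = j then 1 else 0)" .
    qed
    then have "lc r c (cols M2) = lc r (\<lambda>k. if k = j then 1 else 0) (cols M2)" by (rule lc_cong)
    then show "cols M1 j = cols M2 j" using c lc_delta[OF j] by simp
  qed
  have "M1 = M2"
  proof (intro ext)
    fix i j show "M1 i j = M2 i j"
    proof (cases "j < r")
      case True then show ?thesis using colj[OF True] unfolding cols_def by metis
    next
      case False then show ?thesis using crefD(6)[OF c1, of i j] crefD(6)[OF c2, of i j] by simp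
    qed
  qed
  then show ?thesis using p by simp
qed

lemma echelon_eq: "is_cref m r M p \<Longrightarrow> echelon m r (colspace r M) = (M, p)"
  unfolding echelon_def
proof (rule the_equality)
  assume "is_cref m r M p"
  then show "case (M, p) of (M', p') \<Rightarrow> is_cref m r M' p' \<and> colspace r M' = colspace r M" by simp
next
  fix x assume cr: "is_cref m r M p" and x: "case x of (M', p') \<Rightarrow> is_cref m r M' p' \<and> colspace r M' = colspace r M"
  obtain M' p' where xe: "x = (M', p')" by (cases x)
  then show "x = (M, p)" using cref_unique[OF cr, of M' p'] x by auto
qed


definition C :: "nat \<Rightarrow> nat \<Rightarrow> ((nat \<Rightarrow> nat \<Rightarrow> bit) \<times> (nat \<Rightarrow> nat)) set" where
  "C m r = {(M, p). is_cref m r M p}"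

fun G :: "nat \<Rightarrow> nat \<Rightarrow> nat" where
  "G 0 0 = 1" | "G 0 (Suc r) = 0" | "G (Suc m) 0 = 1"
| "G (Suc m) (Suc r) = G m r + 2^(Suc r) * G m (Suc r)"

lemma C_0: "C m 0 = {(\<lambda>i j. 0, \<lambda>j. 0)}"
  unfolding C_def is_cref_def by (auto simp: fun_eq_iff)

lemma C_empty: "C 0 (Suc r) = {}"
  unfolding C_def is_cref_def by auto

definition fA :: "nat \<Rightarrow> nat \<Rightarrow> ((nat \<Rightarrow> nat \<Rightarrow> bit) \<times> (nat \<Rightarrow> nat)) \<Rightarrow> ((nat \<Rightarrow> nat \<Rightarrow> bit) \<times> (nat \<Rightarrow> nat))" where
  "fA m r x = (ext1 m r (fst x), (snd x)(r := m))"

definition gB :: "nat \<Rightarrow> (((nat \<Rightarrow> nat \<Rightarrow> bit) \<times> (nat \<Rightarrow> nat)) \<times> (nat \<Rightarrow> bit)) \<Rightarrow> ((nat \<Rightarrow> nat \<Rightarrow> bit) \<times> (nat \<Rightarrow> nat))" where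
  "gB m y = (ext2 m (snd y) (fst (fst y)), snd (fst y))"

lemma C_caseA:
  assumes cr: "is_cref (Suc m) (Suc r) M p" and pr: "p r = m"
  shows "(M, p) \<in> fA m r ` C m r"
proof -
  note D = crefD[OF cr]
  define M0 where "M0 = (\<lambda>i j. if j = r \<or> i = m then 0 else M i j)"
  define p0 where "p0 = p(r := 0)"
  have cr0: "is_cref m r M0 p0"
  proof (rule crefI)
    fix j k assume "j < k" "k < r" then show "p0 j < p0 k" using D(1)[of j k] unfolding p0_def by simp
  next
    fix j assume "j < r" then show "p0 j < m" using D(1)[of j r] pr unfolding p0_def by simp
  next
    fix j assume "r \<le> j" then show "p0 j = 0" using D(3)[of j] unfolding p0_def by (cases "j = r") auto
  next
    fix j k assume j: "j < r" and k: "k < r"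
    have "p k < m" using D(1)[of k r] k pr by simp
    then show "M0 (p0 k) j = (if k = j then 1 else 0)" using D(4)[of j k] j k unfolding M0_def p0_def by simp
  next
    fix j i assume j: "j < r" and i: "i < p0 j"
    have "p j < m" using D(1)[of j r] j pr by simp
    then show "M0 i j = 0" using D(5)[of j i] i j unfolding M0_def p0_def by simp
  next
    fix i j assume "m \<le> i \<or> r \<le> j"
    then show "M0 i j = 0" using D(6)[of i j] unfolding M0_def by auto
  qed
  have "ext1 m r M0 = M"
  proof (intro ext)
    fix i j show "ext1 m r M0 i j = M i j"
    proof (cases "j = r")
      case True
      show ?thesis
      proof (cases "i = m")
        case True then show ?thesis using D(4)[of r r] pr \<open>j = r\<close> by (simp add: ext1_def)
      next
        case False
        then have "i < m \<or> Suc m \<le> i" by arith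
        then have "M i r = 0" using D(5)[of r i] D(6)[of i r] pr by auto
        then show ?thesis using False True by (simp add: ext1_def M0_def)
      qed
    next
      case False
      show ?thesis
      proof (cases "i = m")
        case True
        have "j < r \<or> Suc r \<le> j" using False by arith
        then have "M m j = 0" using D(4)[of j r] D(6)[of m j] pr False by auto
        then show ?thesis using False True by (simp add: ext1_def M0_def)
      next
        case False2: False
        then show ?thesis using False by (simp add: ext1_def M0_def)
      qed
    qed
  qed
  moreover have "p0(r := m) = p" unfolding p0_def using pr by auto
  ultimately have "fA m r (M0, p0) = (M, p)" unfolding fA_def by simp
  moreover have "(M0, p0) \<in> C m r" using cr0 unfolding C_def by simp
  ultimately show ?thesis by (metis image_eqI)
qed

lemma C_caseB:
  assumes cr: "is_cref (Suc m) (Suc r) M p" and pr: "p r \<noteq> m"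
  shows "(M, p) \<in> gB m ` (C m (Suc r) \<times> binvecs (Suc r))"
proof -
  note D = crefD[OF cr]
  have prm: "p r < m" using D(2)[of r] pr by simp
  have pl: "\<And>j. j < Suc r \<Longrightarrow> p j < m" using D(1) prm by (metis less_Suc_eq less_trans)
  define M' where "M' = (\<lambda>i j. if i = m then 0 else M i j)"
  define w where "w = (\<lambda>j. M m j)"
  have cr': "is_cref m (Suc r) M' p"
  proof (rule crefI)
    fix j k assume "j < k" "k < Suc r" then show "p j < p k" by (rule D(1))
  next
    fix j assume "j < Suc r" then show "p j < m" by (rule pl)
  next
    fix j assume "Suc r \<le> j" then show "p j = 0" by (rule D(3))
  next
    fix j k assume j: "j < Suc r" and k: "k < Suc r"
    then show "M' (p k) j = (if k = j then 1 else 0)" using pl[OF k] D(4)[OF j k] unfolding M'_def by simp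
  next
    fix j i assume j: "j < Suc r" and i: "i < p j"
    then show "M' i j = 0" using pl[OF j] D(5)[OF j i] unfolding M'_def by simp
  next
    fix i j assume "m \<le> i \<or> Suc r \<le> j"
    then show "M' i j = 0" using D(6)[of i j] unfolding M'_def by (cases "i = m") auto
  qed
  have wb: "w \<in> binvecs (Suc r)" unfolding binvecs_def w_def using D(6) by simp
  have "ext2 m w M' = M" unfolding ext2_def w_def M'_def by (auto simp: fun_eq_iff)
  then have "gB m ((M', p), w) = (M, p)" unfolding gB_def by simp
  moreover have "((M', p), w) \<in> C m (Suc r) \<times> binvecs (Suc r)" using cr' wb unfolding C_def by simp
  ultimately show ?thesis by (metis image_eqI)
qed

lemma C_Suc: "C (Suc m) (Suc r) = fA m r ` C m r \<union> gB m ` (C m (Suc r) \<times> binvecs (Suc r))"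
proof
  show "C (Suc m) (Suc r) \<subseteq> fA m r ` C m r \<union> gB m ` (C m (Suc r) \<times> binvecs (Suc r))"
  proof
    fix x assume "x \<in> C (Suc m) (Suc r)"
    then obtain M p where x: "x = (M, p)" and cr: "is_cref (Suc m) (Suc r) M p" unfolding C_def by auto
    show "x \<in> fA m r ` C m r \<union> gB m ` (C m (Suc r) \<times> binvecs (Suc r))"
      using C_caseA[OF cr] C_caseB[OF cr] x by (cases "p r = m") auto
  qed
  show "fA m r ` C m r \<union> gB m ` (C m (Suc r) \<times> binvecs (Suc r)) \<subseteq> C (Suc m) (Suc r)"
    unfolding C_def fA_def gB_def using cref_ext1 cref_ext2 by auto
qed

lemma C_disj: "fA m r ` C m r \<inter> gB m ` (C m (Suc r) \<times> binvecs (Suc r)) = {}"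
proof -
  have "\<And>x. x \<in> fA m r ` C m r \<Longrightarrow> snd x r = m" unfolding fA_def by auto
  moreover have "\<And>x. x \<in> gB m ` (C m (Suc r) \<times> binvecs (Suc r)) \<Longrightarrow> snd x r < m"
    unfolding gB_def C_def using crefD(2) by fastforce
  ultimately show ?thesis by fastforce
qed

lemma fA_inj: "inj_on (fA m r) (C m r)"
proof (rule inj_onI)
  fix x y assume x: "x \<in> C m r" and y: "y \<in> C m r" and eq: "fA m r x = fA m r y"
  obtain M p where xe: "x = (M, p)" and cx: "is_cref m r M p" using x unfolding C_def by auto
  obtain M' p' where ye: "y = (M', p')" and cy: "is_cref m r M' p'" using y unfolding C_def by auto
  have e1: "ext1 m r M = ext1 m r M'" and e2: "p(r := m) = p'(r := m)" using eq xe ye unfolding fA_def by auto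
  have "M = M'"
  proof (intro ext)
    fix i j show "M i j = M' i j"
    proof (cases "j = r \<and> i = m")
      case True then show ?thesis using crefD(6)[OF cx, of i j] crefD(6)[OF cy, of i j] by simp
    next
      case False
      then have "ext1 m r M i j = M i j" "ext1 m r M' i j = M' i j" by (auto simp: ext1_def)
      then show ?thesis using fun_cong[OF fun_cong[OF e1, of i], of j] by simp
    qed
  qed
  moreover have "p = p'"
  proof
    fix j show "p j = p' j"
      using fun_cong[OF e2, of j] crefD(3)[OF cx, of r] crefD(3)[OF cy, of r] by (cases "j = r") auto
  qed
  ultimately show "x = y" using xe ye by simp
qed

lemma gB_inj: "inj_on (gB m) (C m (Suc r) \<times> binvecs (Suc r))"
proof (rule inj_onI)
  fix x y assume x: "x \<in> C m (Suc r) \<times> binvecs (Suc r)" and y: "y \<in> C m (Suc r) \<times> binvecs (Suc r)"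
    and eq: "gB m x = gB m y"
  obtain M p w where xe: "x = ((M, p), w)" and cx: "is_cref m (Suc r) M p" using x unfolding C_def by auto
  obtain M' p' w' where ye: "y = ((M', p'), w')" and cy: "is_cref m (Suc r) M' p'" using y unfolding C_def by auto
  have e1: "ext2 m w M = ext2 m w' M'" and e2: "p = p'" using eq xe ye unfolding gB_def by auto
  have "w = w'"
  proof
    fix j show "w j = w' j" using fun_cong[OF fun_cong[OF e1, of m], of j] by (simp add: ext2_def)
  qed
  moreover have "M = M'"
  proof (intro ext)
    fix i j show "M i j = M' i j"
    proof (cases "i = m")
      case True then show ?thesis using crefD(6)[OF cx, of i j] crefD(6)[OF cy, of i j] by simp
    next
      case False then show ?thesis using fun_cong[OF fun_cong[OF e1, of i], of j] by (simp add: ext2_def)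
    qed
  qed
  ultimately show "x = y" using xe ye e2 by simp
qed

lemma card_C: "finite (C m r) \<and> card (C m r) = G m r"
proof (induction m arbitrary: r)
  case 0
  show ?case by (cases r) (simp_all add: C_0 C_empty)
next
  case (Suc m)
  show ?case
  proof (cases r)
    case 0 then show ?thesis by (simp add: C_0)
  next
    case (Suc r')
    have f1: "finite (fA m r' ` C m r')" using Suc.IH by simp
    have f2: "finite (gB m ` (C m (Suc r') \<times> binvecs (Suc r')))"
      using Suc.IH finite_binvecs by simp
    have "card (C (Suc m) (Suc r')) = card (fA m r' ` C m r') + card (gB m ` (C m (Suc r') \<times> binvecs (Suc r')))"
      unfolding C_Suc by (rule card_Un_disjoint[OF f1 f2 C_disj])
    also have "\<dots> = G m r' + G m (Suc r') * 2 ^ Suc r'"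
      using card_image[OF fA_inj] card_image[OF gB_inj] Suc.IH card_binvecs
      by (simp add: card_cartesian_product)
    finally show ?thesis using f1 f2 Suc C_Suc by simp
  qed
qed

lemma G_zero: "m < r \<Longrightarrow> G m r = 0"
proof (induction m arbitrary: r)
  case 0 then show ?case by (cases r) auto
next
  case (Suc m) then show ?case by (cases r) auto
qed

lemma G_diag: "G m m = 1"
  by (induction m) (simp_all add: G_zero)

lemma gauss_gen: "(\<Sum>k\<le>n. G n k * 2^(k*(k-1) div 2) * t^k) = (\<Prod>j<n. 1 + 2^j * (t::nat))"
proof (induction n arbitrary: t)
  case 0 then show ?case by simp
next
  case (Suc n)
  have a: "\<And>k. (2::nat)^(Suc k * (Suc k - 1) div 2) = 2^k * 2^(k*(k-1) div 2)"
  proof -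
    fix k :: nat
    have "Suc k * (Suc k - 1) div 2 = k + k*(k-1) div 2"
    proof (cases k)
      case 0 then show ?thesis by simp
    next
      case (Suc k')
      have "Suc k * k = 2 * k + k * (k - 1)" using Suc by (simp add: algebra_simps)
      then show ?thesis by simp
    qed
    then show "(2::nat)^(Suc k * (Suc k - 1) div 2) = 2^k * 2^(k*(k-1) div 2)" by (simp add: power_add)
  qed
  define L where "L = (\<lambda>s::nat. \<Sum>k\<le>n. G n k * 2^(k*(k-1) div 2) * s^k)"
  have s1: "(\<Sum>k\<le>Suc n. G (Suc n) k * 2^(k*(k-1) div 2) * t^k)
      = 1 + (\<Sum>k\<le>n. G (Suc n) (Suc k) * 2^(Suc k*(Suc k-1) div 2) * t^Suc k)"
    by (subst sum.atMost_Suc_shift) simp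
  have s2: "(\<Sum>k\<le>n. G (Suc n) (Suc k) * 2^(Suc k*(Suc k-1) div 2) * t^Suc k)
      = (\<Sum>k\<le>n. G n k * 2^(Suc k*(Suc k-1) div 2) * t^Suc k)
      + (\<Sum>k\<le>n. 2^Suc k * G n (Suc k) * 2^(Suc k*(Suc k-1) div 2) * t^Suc k)"
    by (simp add: sum.distrib algebra_simps)
  have X: "(\<Sum>k\<le>n. G n k * 2^(Suc k*(Suc k-1) div 2) * t^Suc k) = t * L (2*t)"
    unfolding L_def sum_distrib_left
  proof (rule sum.cong)
    fix k show "G n k * 2^(Suc k*(Suc k-1) div 2) * t^Suc k = t * (G n k * 2^(k*(k-1) div 2) * (2*t)^k)"
      by (simp only: a power_mult_distrib power_Suc mult_ac)
  qed simp
  have Y: "1 + (\<Sum>k\<le>n. 2^Suc k * G n (Suc k) * 2^(Suc k*(Suc k-1) div 2) * t^Suc k) = L (2*t)"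
  proof -
    have "L (2*t) = G n 0 * 2^(0*(0-1) div 2) * (2*t)^0 + (\<Sum>k\<le>n. G n (Suc k) * 2^(Suc k*(Suc k-1) div 2) * (2*t)^Suc k)"
      unfolding L_def by (subst sum.atMost_Suc_shift[symmetric]) (simp add: G_zero)
    also have "G n 0 = 1" by (cases n) auto
    also have "(\<Sum>k\<le>n. G n (Suc k) * 2^(Suc k*(Suc k-1) div 2) * (2*t)^Suc k)
        = (\<Sum>k\<le>n. 2^Suc k * G n (Suc k) * 2^(Suc k*(Suc k-1) div 2) * t^Suc k)"
      by (rule sum.cong) (simp_all only: power_mult_distrib mult_ac)
    finally show ?thesis by simp
  qed
  have "(\<Sum>k\<le>Suc n. G (Suc n) k * 2^(k*(k-1) div 2) * t^k) = (1 + t) * L (2*t)"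
    using s1 s2 X Y by (simp add: algebra_simps)
  also have "\<dots> = (1 + t) * (\<Prod>j<n. 1 + 2^j * (2*t))" by (simp only: L_def Suc.IH)
  also have "\<dots> = (\<Prod>j<Suc n. 1 + 2^j * t)"
    by (subst prod.lessThan_Suc_shift) (simp add: algebra_simps)
  finally show ?case .
qed


definition cl :: "nat \<Rightarrow> nat \<Rightarrow> (nat \<Rightarrow> nat) \<Rightarrow> nat list" where
  "cl m r p = sorted_list_of_set ({0..<m} - p ` {0..<r})"

lemma cl_props:
  assumes cr: "is_cref m r M p"
  shows "set (cl m r p) = {0..<m} - p ` {0..<r}" "distinct (cl m r p)" "length (cl m r p) = m - r"
proof -
  show "set (cl m r p) = {0..<m} - p ` {0..<r}" unfolding cl_def by simp
  show "distinct (cl m r p)" unfolding cl_def by simp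
  have inj: "inj_on p {0..<r}" using smono_inj[of r p] crefD(1)[OF cr] by (simp add: lessThan_atLeast0)
  have sub: "p ` {0..<r} \<subseteq> {0..<m}" using crefD(2)[OF cr] by auto
  have "length (cl m r p) = card ({0..<m} - p ` {0..<r})" unfolding cl_def by simp
  also have "\<dots> = m - r" using card_Diff_subset[OF _ sub] card_image[OF inj] by simp
  finally show "length (cl m r p) = m - r" .
qed

lemma Pmat_eq: "Pmat m r M p = (\<lambda>i k. if k < r then M i k
      else if k < m then (if i = cl m r p ! (k - r) then 1 else 0) else 0)"
  unfolding Pmat_def cl_def ..

lemma sum_split_lt: "(r::nat) \<le> m \<Longrightarrow> (\<Sum>k<m. f k) = (\<Sum>k<r. f k) + (\<Sum>k\<in>{r..<m}. f k)"
proof -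
  assume "r \<le> m"
  then have "sum f {0..<r} + sum f {r..<m} = sum f {0..<m}" by (rule sum.atLeastLessThan_concat[OF le0])
  then show ?thesis by (simp add: atLeast0LessThan)
qed

lemma mv_piv:
  assumes cr: "is_cref m r M p" and j: "j < r"
  shows "mat_vec m (Pmat m r M p) u (p j) = u j"
proof -
  have rm: "r \<le> m" by (rule cref_le[OF cr])
  note L = cl_props[OF cr]
  have "mat_vec m (Pmat m r M p) u (p j) = (\<Sum>k<r. M (p j) k * u k) + (\<Sum>k\<in>{r..<m}. Pmat m r M p (p j) k * u k)"
    unfolding mat_vec_def by (simp add: sum_split_lt[OF rm] Pmat_eq)
  also have "(\<Sum>k\<in>{r..<m}. Pmat m r M p (p j) k * u k) = 0"
  proof (rule sum.neutral, intro ballI)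
    fix k assume k: "k \<in> {r..<m}"
    then have "cl m r p ! (k - r) \<in> set (cl m r p)" using L(3) by auto
    moreover have "p j \<in> p ` {0..<r}" using j by simp
    ultimately have "p j \<noteq> cl m r p ! (k - r)" using L(1) by auto
    then show "Pmat m r M p (p j) k * u k = 0" using k by (simp add: Pmat_eq)
  qed
  also have "(\<Sum>k<r. M (p j) k * u k) = (\<Sum>k<r. if k = j then u k else 0)"
    by (rule sum.cong) (use crefD(4)[OF cr _ j] in auto)
  also have "\<dots> = u j" using j by simp
  finally show ?thesis by simp
qed

lemma mv_cl:
  assumes cr: "is_cref m r M p" and t: "t < m - r"
  shows "mat_vec m (Pmat m r M p) u (cl m r p ! t) = (\<Sum>k<r. M (cl m r p ! t) k * u k) + u (r + t)"
proof -
  have rm: "r \<le> m" by (rule cref_le[OF cr])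
  note L = cl_props[OF cr]
  have "mat_vec m (Pmat m r M p) u (cl m r p ! t) = (\<Sum>k<r. M (cl m r p ! t) k * u k)
       + (\<Sum>k\<in>{r..<m}. Pmat m r M p (cl m r p ! t) k * u k)"
    unfolding mat_vec_def by (simp add: sum_split_lt[OF rm] Pmat_eq)
  also have "(\<Sum>k\<in>{r..<m}. Pmat m r M p (cl m r p ! t) k * u k) = (\<Sum>k\<in>{r..<m}. if k = r + t then u k else 0)"
  proof (rule sum.cong)
    fix k assume k: "k \<in> {r..<m}"
    have "(cl m r p ! t = cl m r p ! (k - r)) = (t = k - r)"
      using nth_eq_iff_index_eq[OF L(2)] L(3) t k by auto
    then show "Pmat m r M p (cl m r p ! t) k * u k = (if k = r + t then u k else 0)"
      using k by (auto simp: Pmat_eq)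
  qed simp
  also have "\<dots> = u (r + t)" using t by simp
  finally show ?thesis .
qed

lemma mv_binvecs:
  assumes cr: "is_cref m r M p"
  shows "mat_vec m (Pmat m r M p) u \<in> binvecs m"
  unfolding binvecs_def
proof (intro CollectI allI impI)
  fix i assume i: "m \<le> i"
  note L = cl_props[OF cr]
  have "\<And>k. k < m \<Longrightarrow> Pmat m r M p i k = 0"
  proof -
    fix k assume k: "k < m"
    show "Pmat m r M p i k = 0"
    proof (cases "k < r")
      case True then show ?thesis using crefD(6)[OF cr, of i k] i by (simp add: Pmat_eq)
    next
      case False
      then have "cl m r p ! (k - r) \<in> set (cl m r p)" using L(3) k by auto
      then have "cl m r p ! (k - r) < m" using L(1) by auto
      then show ?thesis using False k i by (auto simp: Pmat_eq)
    qed
  qed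
  then show "mat_vec m (Pmat m r M p) u i = 0" unfolding mat_vec_def by simp
qed

lemma mv_add: "mat_vec m P (\<lambda>i. u i + v i) = (\<lambda>i. mat_vec m P u i + mat_vec m P v i)"
  unfolding mat_vec_def by (simp add: sum.distrib distrib_left)

lemma mv_inj:
  assumes cr: "is_cref m r M p"
  shows "inj_on (mat_vec m (Pmat m r M p)) (binvecs m)"
proof (rule inj_onI)
  fix u v assume u: "u \<in> binvecs m" and v: "v \<in> binvecs m"
    and eq: "mat_vec m (Pmat m r M p) u = mat_vec m (Pmat m r M p) v"
  have rm: "r \<le> m" by (rule cref_le[OF cr])
  have low: "\<And>j. j < r \<Longrightarrow> u j = v j" using mv_piv[OF cr] eq by metis
  have "\<And>t. t < m - r \<Longrightarrow> u (r + t) = v (r + t)"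
  proof -
    fix t assume t: "t < m - r"
    have "(\<Sum>k<r. M (cl m r p ! t) k * u k) = (\<Sum>k<r. M (cl m r p ! t) k * v k)"
      using low by simp
    then show "u (r + t) = v (r + t)" using mv_cl[OF cr t, of u] mv_cl[OF cr t, of v] eq by simp
  qed
  then show "u = v"
  proof -
    assume hi: "\<And>t. t < m - r \<Longrightarrow> u (r + t) = v (r + t)"
    show "u = v"
    proof
      fix i show "u i = v i"
      proof (cases "i < r")
        case True then show ?thesis using low by simp
      next
        case False
        show ?thesis
        proof (cases "i < m")
          case True then show ?thesis using hi[of "i - r"] False by simp
        next
          case False then show ?thesis using u v unfolding binvecs_def by simp
        qed
      qed
    qed
  qed
qed

lemma mv_surj:
  assumes cr: "is_cref m r M p"
  shows "mat_vec m (Pmat m r M p) ` binvecs m = binvecs m"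
  by (rule endo_inj_surj[OF finite_binvecs _ mv_inj[OF cr]]) (use mv_binvecs[OF cr] in blast)

lemma mv_low:
  assumes cr: "is_cref m r M p" and z: "\<And>k. r \<le> k \<Longrightarrow> z k = 0"
  shows "mat_vec m (Pmat m r M p) z = lc r z (cols M)"
proof
  fix i
  have rm: "r \<le> m" by (rule cref_le[OF cr])
  have "mat_vec m (Pmat m r M p) z i = (\<Sum>k<r. M i k * z k) + (\<Sum>k\<in>{r..<m}. Pmat m r M p i k * z k)"
    unfolding mat_vec_def by (simp add: sum_split_lt[OF rm] Pmat_eq)
  also have "(\<Sum>k\<in>{r..<m}. Pmat m r M p i k * z k) = 0" using z by simp
  finally show "mat_vec m (Pmat m r M p) z i = lc r z (cols M) i" unfolding lc_def cols_def by (simp add: mult.commute)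
qed

definition E :: "nat \<Rightarrow> (nat \<Rightarrow> nat \<Rightarrow> bit) \<Rightarrow> (nat \<Rightarrow> bit) \<Rightarrow> (nat \<Rightarrow> bit) \<Rightarrow> int" where
  "E m S b u = (\<Sum>i<m. \<Sum>j<m. lift (u i) * lift (S i j) * lift (u j)) + 2 * (\<Sum>i<m. lift (b i) * lift (u i))"

lemma bssc_val:
  assumes cr: "is_cref m r M p" and u: "u \<in> binvecs m"
  shows "bssc m r (colspace r M) S b (mat_vec m (Pmat m r M p) u)
     = complex_of_real (2 powr (- real r / 2)) * (\<i> powi E m S b u) * of_int (lift (\<Prod>i\<in>{r..<m}. 1 + b i + u i))"
proof -
  have th: "(THE u'. u' \<in> binvecs m \<and> mat_vec m (Pmat m r M p) u' = mat_vec m (Pmat m r M p) u) = u"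
  proof (rule the_equality)
    show "u \<in> binvecs m \<and> mat_vec m (Pmat m r M p) u = mat_vec m (Pmat m r M p) u" using u by simp
  next
    fix u' assume "u' \<in> binvecs m \<and> mat_vec m (Pmat m r M p) u' = mat_vec m (Pmat m r M p) u"
    then show "u' = u" using mv_inj[OF cr] u by (meson inj_onD)
  qed
  show ?thesis unfolding bssc_def using mv_binvecs[OF cr, of u] echelon_eq[OF cr] th
    by (simp add: Let_def E_def)
qed


lemma ipow_mod: "\<i> powi e = \<i> ^ nat (e mod 4)"
proof -
  have e: "e = 4 * (e div 4) + e mod 4" by simp
  have "\<i> powi e = \<i> powi (4 * (e div 4)) * \<i> powi (e mod 4)"
    by (subst e, rule power_int_add) simp
  also have "\<i> powi (4 * (e div 4)) = 1"
    by (simp add: power_int_mult)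
  also have "\<i> powi (e mod 4) = \<i> ^ nat (e mod 4)"
    by (simp add: power_int_def)
  finally show ?thesis by simp
qed

lemma ipow_eq: "\<i> powi a = \<i> powi b \<Longrightarrow> a mod 4 = b mod 4"
proof -
  assume h: "\<i> powi a = \<i> powi b"
  define x where "x = nat (a mod 4)"
  define y where "y = nat (b mod 4)"
  have x: "x < 4" "int x = a mod 4" unfolding x_def by auto
  have y: "y < 4" "int y = b mod 4" unfolding y_def by auto
  have "\<i> ^ x = \<i> ^ y" using h ipow_mod x_def y_def by metis
  moreover have "x = 0 \<or> x = 1 \<or> x = 2 \<or> x = 3" "y = 0 \<or> y = 1 \<or> y = 2 \<or> y = 3" using x y by auto
  ultimately have "x = y" by (auto simp: numeral_eq_Suc complex_eq_iff)
  then show ?thesis using x y by simp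
qed

lemma norm_ipow: "norm (\<i> powi e) = 1"
  by (simp add: norm_power_int)

lemma ipow_ne0: "\<i> powi e \<noteq> 0"
  using norm_ipow[of e] by auto

lemma lift_if: "lift (if P then 1 else 0) = (if P then 1 else 0)" by simp
lemma mult_if_int: "(y::int) * (if P then 1 else 0) = (if P then y else 0)" "(if P then 1 else 0) * (y::int) = (if P then y else 0)" by simp_all
lemma sum_if_const: "(\<Sum>j\<in>A. if P then f j else 0) = (if P then (\<Sum>j\<in>A. f j) else (0::int))"
  by (cases P) simp_all

lemma bit_prod: "finite A \<Longrightarrow> (\<Prod>i\<in>A. x i) = (if \<forall>i\<in>A. x i = 1 then 1 else (0::bit))"
  by (induction A rule: finite_induct) auto

lemma one_add_add: "(1::bit) + b + u = 1 \<longleftrightarrow> u = b"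
  by (cases b; cases u) simp_all

lemma lift_prod: "lift (\<Prod>i\<in>{(r::nat)..<m}. 1 + b i + u i) = (if \<forall>i\<in>{r..<m}. u i = b i then 1 else 0)"
proof -
  have "(\<Prod>i\<in>{r..<m}. 1 + b i + u i) = (if \<forall>i\<in>{r..<m}. 1 + b i + u i = 1 then 1 else 0)"
    by (rule bit_prod) simp
  then show ?thesis by (simp add: one_add_add)
qed

definition U :: "nat \<Rightarrow> nat \<Rightarrow> (nat \<Rightarrow> bit) \<Rightarrow> (nat \<Rightarrow> bit) set" where
  "U m r b = {u \<in> binvecs m. \<forall>i\<in>{r..<m}. u i = b i}"

definition ux :: "nat \<Rightarrow> nat \<Rightarrow> (nat \<Rightarrow> bit) \<Rightarrow> (nat \<Rightarrow> bit) \<Rightarrow> (nat \<Rightarrow> bit)" where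
  "ux m r b x = (\<lambda>i. if i < m then (if i < r then x i else b i) else 0)"

lemma ux_U: "ux m r b x \<in> U m r b"
  unfolding ux_def U_def binvecs_def by auto

definition cn :: "nat \<Rightarrow> real" where "cn r = 2 powr (- real r / 2)"

lemma cn_pos: "cn r > 0" unfolding cn_def by simp

lemma bssc_U:
  assumes cr: "is_cref m r M p" and u: "u \<in> U m r b"
  shows "bssc m r (colspace r M) S b (mat_vec m (Pmat m r M p) u) = complex_of_real (cn r) * \<i> powi E m S b u"
  using bssc_val[OF cr, of u S b] u unfolding U_def lift_prod cn_def by auto

lemma bssc_notU:
  assumes cr: "is_cref m r M p" and u: "u \<in> binvecs m" "u \<notin> U m r b"
  shows "bssc m r (colspace r M) S b (mat_vec m (Pmat m r M p) u) = 0"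
  using bssc_val[OF cr, of u S b] u unfolding U_def lift_prod by auto

lemma bssc_out: "a \<notin> binvecs m \<Longrightarrow> bssc m r H S b a = 0"
  unfolding bssc_def by simp

lemma bssc_norm:
  assumes cr: "is_cref m r M p" and nz: "bssc m r (colspace r M) S b a \<noteq> 0"
  shows "norm (bssc m r (colspace r M) S b a) = cn r"
proof -
  have "a \<in> binvecs m" using nz bssc_out by metis
  then obtain u where u: "u \<in> binvecs m" "a = mat_vec m (Pmat m r M p) u" using mv_surj[OF cr] by blast
  then have "u \<in> U m r b" using bssc_notU[OF cr] nz by metis
  then show ?thesis using bssc_U[OF cr] u cn_pos[of r] by (simp add: norm_mult norm_ipow)
qed

lemma bssc_supp:
  assumes cr: "is_cref m r M p"
  shows "{a. bssc m r (colspace r M) S b a \<noteq> 0} = mat_vec m (Pmat m r M p) ` U m r b"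
proof
  show "{a. bssc m r (colspace r M) S b a \<noteq> 0} \<subseteq> mat_vec m (Pmat m r M p) ` U m r b"
  proof
    fix a assume "a \<in> {a. bssc m r (colspace r M) S b a \<noteq> 0}"
    then have nz: "bssc m r (colspace r M) S b a \<noteq> 0" by simp
    have "a \<in> binvecs m" using nz bssc_out by metis
    then obtain u where u: "u \<in> binvecs m" "a = mat_vec m (Pmat m r M p) u" using mv_surj[OF cr] by blast
    then have "u \<in> U m r b" using bssc_notU[OF cr] nz by metis
    then show "a \<in> mat_vec m (Pmat m r M p) ` U m r b" using u by blast
  qed
  show "mat_vec m (Pmat m r M p) ` U m r b \<subseteq> {a. bssc m r (colspace r M) S b a \<noteq> 0}"
  proof
    fix a assume "a \<in> mat_vec m (Pmat m r M p) ` U m r b"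
    then obtain u where u: "u \<in> U m r b" "a = mat_vec m (Pmat m r M p) u" by blast
    have "complex_of_real (cn r) \<noteq> 0" using cn_pos[of r] by simp
    then show "a \<in> {a. bssc m r (colspace r M) S b a \<noteq> 0}"
      using bssc_U[OF cr u(1)] u(2) ipow_ne0 by simp
  qed
qed

lemma supp_diff:
  assumes cr: "is_cref m r M p"
  shows "{(\<lambda>i. x i + y i) | x y. x \<in> mat_vec m (Pmat m r M p) ` U m r b \<and> y \<in> mat_vec m (Pmat m r M p) ` U m r b}
     = colspace r M"
proof
  let ?P = "mat_vec m (Pmat m r M p)"
  show "{(\<lambda>i. x i + y i) | x y. x \<in> ?P ` U m r b \<and> y \<in> ?P ` U m r b} \<subseteq> colspace r M"
  proof
    fix z assume "z \<in> {(\<lambda>i. x i + y i) | x y. x \<in> ?P ` U m r b \<and> y \<in> ?P ` U m r b}"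
    then obtain u v where uv: "u \<in> U m r b" "v \<in> U m r b" "z = (\<lambda>i. ?P u i + ?P v i)" by blast
    have low: "\<And>k. r \<le> k \<Longrightarrow> u k + v k = 0"
    proof -
      fix k assume k: "r \<le> k"
      show "u k + v k = 0"
      proof (cases "k < m")
        case True then show ?thesis using uv k unfolding U_def by simp
      next
        case False then show ?thesis using uv unfolding U_def binvecs_def by simp
      qed
    qed
    have "z = ?P (\<lambda>i. u i + v i)" using uv(3) mv_add by metis
    also have "\<dots> = lc r (\<lambda>i. u i + v i) (cols M)" by (rule mv_low[OF cr]) (rule low)
    finally show "z \<in> colspace r M" using in_colspace by metis
  qed
  show "colspace r M \<subseteq> {(\<lambda>i. x i + y i) | x y. x \<in> ?P ` U m r b \<and> y \<in> ?P ` U m r b}"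
  proof
    fix h assume "h \<in> colspace r M"
    then obtain c where c: "h = lc r c (cols M)" using colspaceE by blast
    define z where "z = (\<lambda>k. if k < r then c k else (0::bit))"
    define u0 where "u0 = ux m r b (\<lambda>i. 0)"
    define u1 where "u1 = ux m r b z"
    have u0: "u0 \<in> U m r b" and u1: "u1 \<in> U m r b" unfolding u0_def u1_def by (rule ux_U)+
    have "(\<lambda>i. u1 i + u0 i) = z" using cref_le[OF cr] unfolding u0_def u1_def ux_def z_def by (auto simp: fun_eq_iff)
    then have "(\<lambda>i. ?P u1 i + ?P u0 i) = ?P z" using mv_add by metis
    also have "\<dots> = lc r z (cols M)" by (rule mv_low[OF cr]) (simp add: z_def)
    also have "\<dots> = h" unfolding c z_def by (rule lc_cong) simp
    finally show "h \<in> {(\<lambda>i. x i + y i) | x y. x \<in> ?P ` U m r b \<and> y \<in> ?P ` U m r b}"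
      using u0 u1 by blast
  qed
qed

definition Q :: "nat \<Rightarrow> (nat \<Rightarrow> nat \<Rightarrow> bit) \<Rightarrow> (nat \<Rightarrow> bit) \<Rightarrow> int" where
  "Q r S x = (\<Sum>i<r. \<Sum>j<r. lift (x i) * lift (S i j) * lift (x j))"

lemma lift_sq: "lift x * lift x = lift x"
  by (cases x) simp_all

lemma E_ux:
  assumes S: "S \<in> symmats r" and rm: "r \<le> m" and bb: "\<And>i. r \<le> i \<Longrightarrow> i < m \<Longrightarrow> b i = bb i"
  shows "E m S b (ux m r bb x) = Q r S x + 2 * (\<Sum>i<r. lift (b i) * lift (x i)) + 2 * (\<Sum>i\<in>{r..<m}. lift (b i))"
proof -
  have S0: "\<And>i j. r \<le> i \<or> r \<le> j \<Longrightarrow> S i j = 0" using S unfolding symmats_def by blast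
  let ?u = "ux m r bb x"
  have inner: "\<And>i. (\<Sum>j<m. lift (?u i) * lift (S i j) * lift (?u j)) = (\<Sum>j<r. lift (?u i) * lift (S i j) * lift (?u j))"
  proof -
    fix i
    have "(\<Sum>j\<in>{r..<m}. lift (?u i) * lift (S i j) * lift (?u j)) = 0" using S0 by simp
    then show "?thesis i" by (simp add: sum_split_lt[OF rm])
  qed
  have "(\<Sum>i<m. \<Sum>j<m. lift (?u i) * lift (S i j) * lift (?u j))
      = (\<Sum>i<m. \<Sum>j<r. lift (?u i) * lift (S i j) * lift (?u j))" using inner by simp
  also have "\<dots> = (\<Sum>i<r. \<Sum>j<r. lift (?u i) * lift (S i j) * lift (?u j))"
  proof -
    have "(\<Sum>i\<in>{r..<m}. \<Sum>j<r. lift (?u i) * lift (S i j) * lift (?u j)) = 0" using S0 by simp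
    then show ?thesis by (simp add: sum_split_lt[OF rm])
  qed
  also have "\<dots> = Q r S x" unfolding Q_def ux_def using rm by simp
  finally have q: "(\<Sum>i<m. \<Sum>j<m. lift (?u i) * lift (S i j) * lift (?u j)) = Q r S x" .
  have "(\<Sum>i<m. lift (b i) * lift (?u i)) = (\<Sum>i<r. lift (b i) * lift (?u i)) + (\<Sum>i\<in>{r..<m}. lift (b i) * lift (?u i))"
    by (rule sum_split_lt[OF rm])
  also have "(\<Sum>i<r. lift (b i) * lift (?u i)) = (\<Sum>i<r. lift (b i) * lift (x i))" unfolding ux_def using rm by simp
  also have "(\<Sum>i\<in>{r..<m}. lift (b i) * lift (?u i)) = (\<Sum>i\<in>{r..<m}. lift (b i))"
    by (rule sum.cong) (simp_all add: ux_def bb lift_sq)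
  finally show ?thesis unfolding E_def using q by simp
qed

lemma Q_delta:
  assumes k: "k < (r::nat)"
  shows "Q r S (\<lambda>i. if i = k then 1 else 0) = lift (S k k)"
proof -
  have "(\<Sum>i<r. \<Sum>j<r. lift (if i = k then 1 else 0) * lift (S i j) * lift (if j = k then 1 else 0))
     = (\<Sum>i<r. if i = k then (\<Sum>j<r. if j = k then lift (S i j) else 0) else 0)"
    by (simp add: lift_if mult_if_int sum_if_const)
  also have "\<dots> = lift (S k k)" using k by simp
  finally show ?thesis unfolding Q_def .
qed
lemma Q_pair:
  assumes k: "k < r" and l: "l < r" and kl: "k \<noteq> (l::nat)" and sym: "S k l = S l k"
  shows "Q r S (\<lambda>i. if i = k \<or> i = l then 1 else 0) = lift (S k k) + lift (S l l) + 2 * lift (S k l)"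
proof -
  have sp: "\<And>i (g::int). (if i = k \<or> i = l then g else 0) = (if i = k then g else 0) + (if i = l then g else 0)"
    using kl by auto
  have "(\<Sum>i<r. \<Sum>j<r. lift (if i = k \<or> i = l then 1 else 0) * lift (S i j) * lift (if j = k \<or> j = l then 1 else 0))
     = (\<Sum>i<r. if i = k \<or> i = l then (\<Sum>j<r. if j = k \<or> j = l then lift (S i j) else 0) else 0)"
  proof (rule sum.cong[OF refl])
    fix i show "(\<Sum>j<r. lift (if i = k \<or> i = l then 1 else 0) * lift (S i j) * lift (if j = k \<or> j = l then 1 else 0))
       = (if i = k \<or> i = l then (\<Sum>j<r. if j = k \<or> j = l then lift (S i j) else 0) else 0)"
      by (cases "i = k \<or> i = l") (simp_all add: lift_if mult_if_int)
  qed
  also have "\<dots> = (\<Sum>i<r. if i = k \<or> i = l then lift (S i k) + lift (S i l) else 0)"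
    using k l by (simp only: sp sum.distrib) simp
  also have "\<dots> = lift (S k k) + lift (S k l) + (lift (S l k) + lift (S l l))"
    using k l by (simp only: sp sum.distrib) simp
  finally show ?thesis unfolding Q_def using sym by simp
qed
lemma sum_delta_b: "(k::nat) < r \<Longrightarrow> (\<Sum>i<r. lift (b i) * lift (if i = k then 1 else 0)) = lift (b k)"
  by (simp add: lift_if mult_if_int)

lemma sum_pair_b:
  assumes "k < r" "l < r" "k \<noteq> (l::nat)"
  shows "(\<Sum>i<r. lift (b i) * lift (if i = k \<or> i = l then 1 else 0)) = lift (b k) + lift (b l)"
proof -
  have "(\<Sum>i<r. lift (b i) * lift (if i = k \<or> i = l then 1 else 0)) = (\<Sum>i<r. (if i = k then lift (b i) else 0) + (if i = l then lift (b i) else 0))"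
    by (rule sum.cong) (use assms in auto)
  also have "\<dots> = (\<Sum>i<r. (if i = k then lift (b i) else 0)) + (\<Sum>i<r. (if i = l then lift (b i) else 0))"
    by (rule sum.distrib)
  also have "\<dots> = lift (b k) + lift (b l)" using assms by simp
  finally show ?thesis .
qed
lemma lift01: "lift x = 0 \<or> lift x = 1"
  by (cases x) simp_all

lemma lift_inj: "lift x = lift y \<Longrightarrow> x = y"
  by (cases x; cases y) simp_all

lemma mod4_single:
  assumes "(lift s1 + 2 * lift c1 + K) mod 4 = (lift s2 + 2 * lift c2 + K) mod 4"
  shows "s1 = s2 \<and> c1 = c2"
proof -
  have "lift s1 = lift s2 \<and> lift c1 = lift c2"
    using assms lift01[of s1] lift01[of s2] lift01[of c1] lift01[of c2] by auto presburger+
  then show ?thesis using lift_inj by blast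
qed

lemma mod4_double:
  assumes "(A + 2 * lift s1) mod 4 = (A + 2 * lift s2) mod 4"
  shows "s1 = s2"
proof -
  have "lift s1 = lift s2"
    using assms lift01[of s1] lift01[of s2] by auto presburger+
  then show ?thesis using lift_inj by blast
qed


lemma bssc_inj:
  assumes c1: "is_cref m r1 M1 p1" and c2': "is_cref m r2 M2 p2"
   and S1: "S1 \<in> symmats r1" and S2: "S2 \<in> symmats r2" and b1: "b1 \<in> binvecs m" and b2: "b2 \<in> binvecs m"
   and eq: "bssc m r1 (colspace r1 M1) S1 b1 = bssc m r2 (colspace r2 M2) S2 b2"
  shows "r1 = r2 \<and> colspace r1 M1 = colspace r2 M2 \<and> S1 = S2 \<and> b1 = b2"
proof -
  define u0 where "u0 = ux m r1 b1 (\<lambda>i. 0)"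
  have u0U: "u0 \<in> U m r1 b1" unfolding u0_def by (rule ux_U)
  define a0 where "a0 = mat_vec m (Pmat m r1 M1 p1) u0"
  have "a0 \<in> {a. bssc m r1 (colspace r1 M1) S1 b1 a \<noteq> 0}" unfolding bssc_supp[OF c1] a0_def using u0U by blast
  then have nz1: "bssc m r1 (colspace r1 M1) S1 b1 a0 \<noteq> 0" by simp
  then have nz2: "bssc m r2 (colspace r2 M2) S2 b2 a0 \<noteq> 0" using eq by simp
  have "cn r1 = cn r2" using bssc_norm[OF c1 nz1] bssc_norm[OF c2' nz2] eq by simp
  then have r: "r1 = r2" unfolding cn_def by (simp add: powr_inj)
  define r where "r = r1"
  have c2: "is_cref m r M2 p2" using c2' r r_def by simp
  have c1': "is_cref m r M1 p1" using c1 r_def by simp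
  have S1': "S1 \<in> symmats r" and S2': "S2 \<in> symmats r" using S1 S2 r r_def by simp_all
  have eq': "bssc m r (colspace r M1) S1 b1 = bssc m r (colspace r M2) S2 b2" using eq r r_def by simp
  have rm: "r \<le> m" using cref_le[OF c1'] .
  have supp: "mat_vec m (Pmat m r M1 p1) ` U m r b1 = mat_vec m (Pmat m r M2 p2) ` U m r b2"
    using bssc_supp[OF c1', of S1 b1] bssc_supp[OF c2, of S2 b2] eq' by simp
  have H: "colspace r M1 = colspace r M2"
    using supp_diff[OF c1', of b1] supp_diff[OF c2, of b2] supp by simp
  have MP: "M1 = M2 \<and> p1 = p2" by (rule cref_unique[OF c1' c2 H])
  let ?P = "mat_vec m (Pmat m r M1 p1)"
  have UU: "U m r b1 = U m r b2"
  proof -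
    have "?P ` U m r b1 = ?P ` U m r b2" using supp MP by simp
    moreover have "U m r b1 \<subseteq> binvecs m" "U m r b2 \<subseteq> binvecs m" unfolding U_def by auto
    ultimately show ?thesis using inj_on_image_eq_iff[OF mv_inj[OF c1']] by blast
  qed
  have bhi: "\<And>i. r \<le> i \<Longrightarrow> i < m \<Longrightarrow> b2 i = b1 i"
  proof -
    fix i assume i: "r \<le> i" "i < m"
    have "u0 \<in> U m r b2" using u0U UU r_def by simp
    then have "u0 i = b2 i" using i unfolding U_def by auto
    moreover have "u0 i = b1 i" using i r_def unfolding u0_def ux_def by simp
    ultimately show "b2 i = b1 i" by simp
  qed
  define K where "K = (\<Sum>i\<in>{r..<m}. lift (b1 i))"
  have K2: "(\<Sum>i\<in>{r..<m}. lift (b2 i)) = K" unfolding K_def by (rule sum.cong) (simp_all add: bhi)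
  have key: "\<And>x. (Q r S1 x + 2 * (\<Sum>i<r. lift (b1 i) * lift (x i)) + 2 * K) mod 4
              = (Q r S2 x + 2 * (\<Sum>i<r. lift (b2 i) * lift (x i)) + 2 * K) mod 4"
  proof -
    fix x
    let ?u = "ux m r b1 x"
    have uU1: "?u \<in> U m r b1" by (rule ux_U)
    then have uU2: "?u \<in> U m r b2" using UU by simp
    have e1: "bssc m r (colspace r M1) S1 b1 (mat_vec m (Pmat m r M1 p1) ?u) = complex_of_real (cn r) * \<i> powi E m S1 b1 ?u"
      by (rule bssc_U[OF c1' uU1])
    have e2: "bssc m r (colspace r M2) S2 b2 (mat_vec m (Pmat m r M2 p2) ?u) = complex_of_real (cn r) * \<i> powi E m S2 b2 ?u"
      by (rule bssc_U[OF c2 uU2])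
    have e3: "bssc m r (colspace r M1) S1 b1 (mat_vec m (Pmat m r M1 p1) ?u) = bssc m r (colspace r M2) S2 b2 (mat_vec m (Pmat m r M2 p2) ?u)"
      using eq' MP by simp
    have "complex_of_real (cn r) * \<i> powi E m S1 b1 ?u = complex_of_real (cn r) * \<i> powi E m S2 b2 ?u"
      using e1 e2 e3 by metis
    moreover have "complex_of_real (cn r) \<noteq> 0" using cn_pos[of r] by simp
    ultimately have "\<i> powi E m S1 b1 ?u = \<i> powi E m S2 b2 ?u" by simp
    then have "E m S1 b1 ?u mod 4 = E m S2 b2 ?u mod 4" by (rule ipow_eq)
    moreover have "E m S1 b1 ?u = Q r S1 x + 2 * (\<Sum>i<r. lift (b1 i) * lift (x i)) + 2 * K"
      using E_ux[OF S1' rm, of b1 b1 x] unfolding K_def by simp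
    moreover have "E m S2 b2 ?u = Q r S2 x + 2 * (\<Sum>i<r. lift (b2 i) * lift (x i)) + 2 * K"
      using E_ux[OF S2' rm, of b2 b1 x] bhi K2 by simp
    ultimately show "?thesis x" by simp
  qed
  have diag: "\<And>k. k < r \<Longrightarrow> S1 k k = S2 k k \<and> b1 k = b2 k"
  proof -
    fix k assume k: "k < r"
    have "(lift (S1 k k) + 2 * lift (b1 k) + 2 * K) mod 4 = (lift (S2 k k) + 2 * lift (b2 k) + 2 * K) mod 4"
      using key[of "\<lambda>i. if i = k then 1 else 0"] Q_delta[OF k] sum_delta_b[OF k] by simp
    then show "S1 k k = S2 k k \<and> b1 k = b2 k" by (rule mod4_single)
  qed
  have sym1: "\<And>i j. S1 i j = S1 j i" and sym2: "\<And>i j. S2 i j = S2 j i"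
    using S1' S2' unfolding symmats_def by auto
  have out1: "\<And>i j. r \<le> i \<or> r \<le> j \<Longrightarrow> S1 i j = 0" and out2: "\<And>i j. r \<le> i \<or> r \<le> j \<Longrightarrow> S2 i j = 0"
    using S1' S2' unfolding symmats_def by auto
  have off: "\<And>k l. k < r \<Longrightarrow> l < r \<Longrightarrow> k \<noteq> l \<Longrightarrow> S1 k l = S2 k l"
  proof -
    fix k l assume k: "k < r" and l: "l < r" and kl: "k \<noteq> l"
    define A where "A = lift (S1 k k) + lift (S1 l l) + 2 * (lift (b1 k) + lift (b1 l)) + 2 * K"
    have "(lift (S1 k k) + lift (S1 l l) + 2 * lift (S1 k l) + 2 * (lift (b1 k) + lift (b1 l)) + 2 * K) mod 4
        = (lift (S2 k k) + lift (S2 l l) + 2 * lift (S2 k l) + 2 * (lift (b2 k) + lift (b2 l)) + 2 * K) mod 4"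
      using key[of "\<lambda>i. if i = k \<or> i = l then 1 else 0"] Q_pair[OF k l kl sym1[of k l]] Q_pair[OF k l kl sym2[of k l]]
        sum_pair_b[OF k l kl, of b1] sum_pair_b[OF k l kl, of b2] by simp
    moreover have "S2 k k = S1 k k" "S2 l l = S1 l l" "b2 k = b1 k" "b2 l = b1 l" using diag k l by auto
    ultimately have "(A + 2 * lift (S1 k l)) mod 4 = (A + 2 * lift (S2 k l)) mod 4"
      unfolding A_def by (simp add: algebra_simps)
    then show "S1 k l = S2 k l" by (rule mod4_double)
  qed
  have SS: "S1 = S2"
  proof (intro ext)
    fix i j show "S1 i j = S2 i j"
    proof (cases "i < r \<and> j < r")
      case True then show ?thesis using diag off by (cases "i = j") auto
    next
      case False then show ?thesis using out1[of i j] out2[of i j] by auto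
    qed
  qed
  have bb: "b1 = b2"
  proof
    fix i show "b1 i = b2 i"
    proof (cases "i < r")
      case True then show ?thesis using diag by simp
    next
      case False
      show ?thesis
      proof (cases "i < m")
        case True then show ?thesis using bhi[of i] False by simp
      next
        case False then show ?thesis using b1 b2 unfolding binvecs_def by simp
      qed
    qed
  qed
  show ?thesis using r H SS bb r_def by simp
qed


lemma grass_eq: "grassmann m r = (\<lambda>x. colspace r (fst x)) ` C m r"
proof
  show "grassmann m r \<subseteq> (\<lambda>x. colspace r (fst x)) ` C m r"
  proof
    fix H assume "H \<in> grassmann m r"
    then have "is_subspace2 m H \<and> card H = 2^r" by (rule grass_props)
    then obtain M p where "is_cref m r M p" "colspace r M = H" using cref_exists by blast
    then show "H \<in> (\<lambda>x. colspace r (fst x)) ` C m r" unfolding C_def by force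
  qed
  show "(\<lambda>x. colspace r (fst x)) ` C m r \<subseteq> grassmann m r"
    unfolding C_def using cref_grass by auto
qed

lemma grass_inj: "inj_on (\<lambda>x. colspace r (fst x)) (C m r)"
proof (rule inj_onI)
  fix x y assume "x \<in> C m r" "y \<in> C m r" and eq: "colspace r (fst x) = colspace r (fst y)"
  then obtain M p M' p' where "x = (M, p)" "y = (M', p')" "is_cref m r M p" "is_cref m r M' p'"
    unfolding C_def by auto
  then show "x = y" using cref_unique eq by auto
qed

lemma card_grass: "card (grassmann m r) = G m r"
  unfolding grass_eq using card_image[OF grass_inj] card_C by simp

lemma finite_grass: "finite (grassmann m r)"
  unfolding grass_eq using card_C by simp

definition T :: "nat \<Rightarrow> (nat \<times> nat) set" where "T r = {(i, j). i \<le> j \<and> j < r}"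

lemma finite_T: "finite (T r)"
proof -
  have "T r \<subseteq> {..<r} \<times> {..<r}" unfolding T_def by auto
  then show ?thesis by (rule finite_subset) simp
qed

lemma card_T: "2 * card (T r) = r * (r + 1)"
proof (induction r)
  case 0 then show ?case by (simp add: T_def)
next
  case (Suc r)
  have e: "T (Suc r) = T r \<union> (\<lambda>i. (i, r)) ` {..r}" unfolding T_def by auto
  have d: "T r \<inter> (\<lambda>i. (i, r)) ` {..r} = {}" unfolding T_def by auto
  have "card (T (Suc r)) = card (T r) + card ((\<lambda>i. (i, r)) ` {..r})"
    unfolding e by (rule card_Un_disjoint[OF finite_T _ d]) simp
  also have "card ((\<lambda>i. (i, r)) ` {..r}) = Suc r" by (subst card_image) (auto simp: inj_on_def)
  finally show ?case using Suc.IH by simp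
qed

lemma card_T': "card (T r) = r * (r + 1) div 2"
  using card_T[of r] by simp

lemma symmats_bij: "bij_betw (\<lambda>S. restrict (\<lambda>(i, j). S i j) (T r)) (symmats r) (PiE (T r) (\<lambda>_. UNIV::bit set))"
proof (rule bij_betwI')
  fix S1 S2 assume S1: "S1 \<in> symmats r" and S2: "S2 \<in> symmats r"
  show "(restrict (\<lambda>(i, j). S1 i j) (T r) = restrict (\<lambda>(i, j). S2 i j) (T r)) = (S1 = S2)"
  proof
    assume eq: "restrict (\<lambda>(i, j). S1 i j) (T r) = restrict (\<lambda>(i, j). S2 i j) (T r)"
    have up: "\<And>i j. i \<le> j \<Longrightarrow> j < r \<Longrightarrow> S1 i j = S2 i j"
    proof -
      fix i j assume "i \<le> j" "j < r"
      then have "(i, j) \<in> T r" unfolding T_def by simp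
      then show "S1 i j = S2 i j" using fun_cong[OF eq, of "(i, j)"] by simp
    qed
    show "S1 = S2"
    proof (intro ext)
      fix i j show "S1 i j = S2 i j"
      proof (cases "i < r \<and> j < r")
        case True
        then show ?thesis
        proof (cases "i \<le> j")
          case True then show ?thesis using up \<open>i < r \<and> j < r\<close> by simp
        next
          case False
          then have "S1 j i = S2 j i" using up \<open>i < r \<and> j < r\<close> by simp
          then show ?thesis using S1 S2 unfolding symmats_def by simp
        qed
      next
        case False then show ?thesis using S1 S2 unfolding symmats_def by auto
      qed
    qed
  qed simp
next
  fix S assume "S \<in> symmats r"
  show "restrict (\<lambda>(i, j). S i j) (T r) \<in> PiE (T r) (\<lambda>_. UNIV)" by simp
next
  fix f assume f: "f \<in> PiE (T r) (\<lambda>_. UNIV::bit set)"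
  define S where "S = (\<lambda>i j. if i \<le> j \<and> j < r then f (i, j) else if j < i \<and> i < r then f (j, i) else 0)"
  have "S \<in> symmats r" unfolding symmats_def S_def by auto
  moreover have "f = restrict (\<lambda>(i, j). S i j) (T r)"
  proof
    fix x show "f x = restrict (\<lambda>(i, j). S i j) (T r) x"
    proof (cases "x \<in> T r")
      case True then show ?thesis unfolding S_def T_def by auto
    next
      case False then show ?thesis using f by (cases x) (auto simp: PiE_def extensional_def)
    qed
  qed
  ultimately show "\<exists>S\<in>symmats r. f = restrict (\<lambda>(i, j). S i j) (T r)" by blast
qed

lemma card_symmats: "card (symmats r) = 2 ^ (r * (r + 1) div 2)"
proof -
  have "card (PiE (T r) (\<lambda>_. UNIV::bit set)) = 2 ^ card (T r)"
    by (simp add: card_PiE card_bit finite_T)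
  then show ?thesis using bij_betw_same_card[OF symmats_bij] card_T' by simp
qed

lemma finite_symmats: "finite (symmats r)"
proof -
  have "finite (PiE (T r) (\<lambda>_. UNIV::bit set))"
    by (intro finite_PiE finite_T) (auto simp: bit_UNIV)
  then show ?thesis using bij_betw_finite[OF symmats_bij] by simp
qed

definition Dom :: "nat \<Rightarrow> nat set \<Rightarrow> (nat \<times> (nat \<Rightarrow> bit) set \<times> (nat \<Rightarrow> nat \<Rightarrow> bit) \<times> (nat \<Rightarrow> bit)) set" where
  "Dom m R = Sigma R (\<lambda>r. grassmann m r \<times> symmats r \<times> binvecs m)"

definition F :: "nat \<Rightarrow> (nat \<times> (nat \<Rightarrow> bit) set \<times> (nat \<Rightarrow> nat \<Rightarrow> bit) \<times> (nat \<Rightarrow> bit)) \<Rightarrow> ((nat \<Rightarrow> bit) \<Rightarrow> complex)" where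
  "F m x = bssc m (fst x) (fst (snd x)) (fst (snd (snd x))) (snd (snd (snd x)))"

lemma F_inj: "inj_on (F m) (Dom m R)"
proof (rule inj_onI)
  fix x y assume x: "x \<in> Dom m R" and y: "y \<in> Dom m R" and eq: "F m x = F m y"
  obtain r1 H1 S1 b1 where xe: "x = (r1, H1, S1, b1)" by (cases x) auto
  obtain r2 H2 S2 b2 where ye: "y = (r2, H2, S2, b2)" by (cases y) auto
  have h1: "H1 \<in> grassmann m r1" "S1 \<in> symmats r1" "b1 \<in> binvecs m" using x xe unfolding Dom_def by auto
  have h2: "H2 \<in> grassmann m r2" "S2 \<in> symmats r2" "b2 \<in> binvecs m" using y ye unfolding Dom_def by auto
  obtain M1 p1 where c1: "is_cref m r1 M1 p1" "colspace r1 M1 = H1"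
    using grass_props[OF h1(1)] cref_exists by blast
  obtain M2 p2 where c2: "is_cref m r2 M2 p2" "colspace r2 M2 = H2"
    using grass_props[OF h2(1)] cref_exists by blast
  have "bssc m r1 (colspace r1 M1) S1 b1 = bssc m r2 (colspace r2 M2) S2 b2"
    using eq xe ye c1 c2 unfolding F_def by simp
  then have "r1 = r2 \<and> colspace r1 M1 = colspace r2 M2 \<and> S1 = S2 \<and> b1 = b2"
    by (rule bssc_inj[OF c1(1) c2(1) h1(2) h2(2) h1(3) h2(3)])
  then show "x = y" using xe ye c1 c2 by simp
qed

lemma V_BSSC_eq: "V_BSSC m = F m ` Dom m {..m}"
  unfolding V_BSSC_def Dom_def F_def by force

lemma V_BC_eq: "V_BC m = F m ` Dom m {m}"
  unfolding V_BC_def Dom_def F_def by force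

lemma card_Dom: "finite R \<Longrightarrow> card (Dom m R) = (\<Sum>r\<in>R. G m r * (2 ^ (r * (r + 1) div 2) * 2 ^ m))"
  unfolding Dom_def
  by (simp add: finite_grass finite_symmats finite_binvecs card_cartesian_product card_grass card_symmats card_binvecs)

lemma tri: "(k::nat) * (k - 1) div 2 + k = k * (k + 1) div 2"
proof (cases k)
  case 0 then show ?thesis by simp
next
  case (Suc j)
  have "k * (k + 1) = k * (k - 1) + 2 * k" using Suc by (simp add: algebra_simps)
  then show ?thesis by simp
qed

lemma prod_shift: "(\<Prod>j<m. 1 + 2^j * (2::nat)) = (\<Prod>r\<in>{1..m}. 2 ^ r + 1)"
  by (induction m) (simp_all add: prod.cl_ivl_Suc algebra_simps)

lemma main_sum: "(\<Sum>r\<le>m. G m r * (2 ^ (r * (r + 1) div 2) * 2 ^ m)) = 2 ^ m * (\<Prod>r\<in>{1..m}. 2 ^ r + 1)"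
proof -
  have "(\<Sum>r\<le>m. G m r * (2 ^ (r * (r + 1) div 2) * 2 ^ m)) = 2^m * (\<Sum>r\<le>m. G m r * 2 ^ (r * (r - 1) div 2) * 2 ^ r)"
    unfolding sum_distrib_left
  proof (rule sum.cong[OF refl])
    fix r
    have "(2::nat) ^ (r * (r + 1) div 2) = 2 ^ (r * (r - 1) div 2) * 2 ^ r"
      using tri[of r] by (metis power_add)
    then show "G m r * (2 ^ (r * (r + 1) div 2) * 2 ^ m) = 2 ^ m * (G m r * 2 ^ (r * (r - 1) div 2) * 2 ^ r)"
      by simp
  qed
  also have "\<dots> = 2^m * (\<Prod>j<m. 1 + 2^j * 2)" by (simp only: gauss_gen)
  finally show ?thesis by (simp only: prod_shift)
qed

lemma card_V_BSSC: "card (V_BSSC m) = 2 ^ m * (\<Prod>r\<in>{1..m}. 2 ^ r + 1)"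
  unfolding V_BSSC_eq using card_image[OF F_inj] card_Dom[of "{..m}" m] main_sum by (simp add: atMost_def)

lemma card_V_BC: "card (V_BC m) = 2 ^ (m * (m + 3) div 2)"
proof -
  have "card (V_BC m) = G m m * (2 ^ (m * (m + 1) div 2) * 2 ^ m)"
    unfolding V_BC_eq using card_image[OF F_inj] card_Dom[of "{m}" m] by simp
  also have "\<dots> = 2 ^ (m * (m + 1) div 2 + m)" by (simp add: G_diag power_add)
  also have "m * (m + 1) div 2 + m = m * (m + 3) div 2"
  proof -
    have "m * (m + 3) = m * (m + 1) + 2 * m" by (simp add: algebra_simps)
    then show ?thesis by simp
  qed
  finally show ?thesis .
qed

lemma prod_pow2: "(\<Prod>r\<in>{1..m}. (2::nat) ^ r) = 2 ^ (m * (m + 1) div 2)"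
proof (induction m)
  case 0 then show ?case by simp
next
  case (Suc m)
  have "Suc m * (Suc m + 1) div 2 = m * (m + 1) div 2 + Suc m"
  proof -
    have "Suc m * (Suc m + 1) = m * (m + 1) + 2 * Suc m" by (simp add: algebra_simps)
    then show ?thesis by simp
  qed
  then show ?case using Suc.IH by (simp add: prod.cl_ivl_Suc power_add)
qed

lemma m3: "m * (m + 3) div 2 = m * (m + 1) div 2 + (m::nat)"
proof -
  have "m * (m + 3) = m * (m + 1) + 2 * m" by (simp add: algebra_simps)
  then show ?thesis by simp
qed

lemma ratio: "real (card (V_BSSC m)) / real (card (V_BC m)) = (\<Prod>r\<in>{1..m}. 1 + 2 powr (- real r))"
proof -
  have e: "(2::nat) ^ (m * (m + 3) div 2) = 2 ^ m * (\<Prod>r\<in>{1..m}. 2 ^ r)"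
    unfolding m3 prod_pow2 by (simp add: power_add)
  have "real (card (V_BSSC m)) / real (card (V_BC m))
      = (2 ^ m * (\<Prod>r\<in>{1..m}. 2 ^ r + 1)) / (2 ^ m * (\<Prod>r\<in>{1..m}. (2::real) ^ r))"
    unfolding card_V_BSSC card_V_BC e by (simp add: add.commute)
  also have "\<dots> = (\<Prod>r\<in>{1..m}. (2::real) ^ r + 1) / (\<Prod>r\<in>{1..m}. (2::real) ^ r)" by simp
  also have "\<dots> = (\<Prod>r\<in>{1..m}. ((2::real) ^ r + 1) / 2 ^ r)" by (rule prod_dividef[symmetric])
  also have "\<dots> = (\<Prod>r\<in>{1..m}. 1 + 2 powr (- real r))"
    by (rule prod.cong[OF refl]) (simp add: pow_neg add_divide_distrib)
  finally show ?thesis .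
qed


theorem corollary1:
  fixes m :: nat
  assumes "1 \<le> m"
  shows "card (V_BSSC m) = 2 ^ m * (\<Prod>r\<in>{1..m}. 2 ^ r + 1)
    \<and> card (V_BC m) = 2 ^ (m * (m + 3) div 2)
    \<and> real (card (V_BSSC m)) / real (card (V_BC m)) = (\<Prod>r\<in>{1..m}. 1 + 2 powr (- real r))
    \<and> strict_mono (\<lambda>n::nat. \<Prod>r\<in>{1..n}. 1 + 2 powr (- real r))
    \<and> (\<lambda>r::nat. 1 + 2 powr (- real (Suc r))) has_prod prodinf (\<lambda>r::nat. 1 + 2 powr (- real (Suc r)))
    \<and> (\<lambda>n::nat. \<Prod>r\<in>{1..n}. 1 + 2 powr (- real r)) \<longlonglongrightarrow> prodinf (\<lambda>r::nat. 1 + 2 powr (- real (Suc r)))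
    \<and> 2.384 < prodinf (\<lambda>r::nat. 1 + 2 powr (- real (Suc r)))
    \<and> prodinf (\<lambda>r::nat. 1 + 2 powr (- real (Suc r))) < 2.385"
proof -
  show ?thesis using card_V_BSSC[of m] card_V_BC[of m] ratio[of m] analysis_part by simp
qed

end
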